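(* Let $H:\mathbb R_+\to(0,1)$ be continuous and satisfy: (H1) there are constants $0<h_1<h_2<1$ with $h_1\le H_t\le h_2$ for all $t\ge0$; (H2) there are constants $D>0$, $\kappa\in(0,1]$ with $|H_t-H_s|\le D|t-s|^\kappa$ for all $t\ge s>0$. Let $Y$ be the multifractional Brownian motion with Hurst function $H$ and put $h_3=\min\{h_1,\kappa\}$. Then for any $\varepsilon>0$ and any $p>2$ there exists a nonnegative random variable $\eta=\eta(\varepsilon,p)$ such that almost surely, for all $0\le t_2<t_1\le t_2+1$, \[ |Y(t_1)-Y(t_2)|\le (t_1^{h_2+\varepsilon}\vee1)(t_1-t_2)^{h_3}\big(|\log(t_1-t_2)|^p\vee1\big)\eta, \] and there exist positive constants $C_1=C_1(\varepsilon,p)$, $C_2=C_2(\varepsilon,p)$ with $\mathbb P(\eta>u)\le C_1e^{-C_2u^2}$ for all $u>0$.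
   Context: The (harmonizable) multifractional Brownian motion with continuous functional parameter $H$ is $Y(t)=\int_{\mathbb R}\frac{e^{itu}-1}{|u|^{H_t+1/2}}\widetilde W(du)$, $t\ge0$, where $\widetilde W$ is the Fourier transform of real Gaussian white noise $W$, i.e. the unique complex-valued random measure with $\int_{\mathbb R}f(u)W(du)=\int_{\mathbb R}\widehat f(u)\widetilde W(du)$ a.s. for all $f\in L^2(\mathbb R)$. *)

theory Defs
  imports "HOL-Probability.Probability"
begin

text \<open>Covariance of the harmonizable multifractional Brownian motion
  Y(t) = int (e^{itu}-1)/|u|^{H_t+1/2} dW~(u), where W~ is the Fourier transform of
  real Gaussian white noise (Fourier convention hat f(u) = int e^{iux} f(x) dx, so that
  E |int g dW~|^2 = (1/(2 pi)) int |g|^2):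
  E[Y(t) Y(s)] = (1/(2 pi)) int Re((e^{itu}-1) conj(e^{isu}-1)) / |u|^{H_t+H_s+1} du.\<close>

definition mbm_cov :: "(real \<Rightarrow> real) \<Rightarrow> real \<Rightarrow> real \<Rightarrow> real" where
  "mbm_cov H t s =
     (1 / (2 * pi)) *
     (LINT u|lborel. Re ((cis (t * u) - 1) * cnj (cis (s * u) - 1)) / \<bar>u\<bar> powr (H t + H s + 1))"

text \<open>Y (indexed by t \<ge> 0) is a harmonizable mBm with functional parameter H on the
  probability space M: each Y t is a real random variable and the finite-dimensional
  distributions are centered jointly Gaussian with covariance mbm_cov H, expressed via
  the joint characteristic functions.\<close>

definition harmonizable_mbm :: "'a measure \<Rightarrow> (real \<Rightarrow> real) \<Rightarrow> (real \<Rightarrow> 'a \<Rightarrow> real) \<Rightarrow> bool" where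
  "harmonizable_mbm M H Y \<longleftrightarrow>
     prob_space M \<and>
     (\<forall>t\<ge>0. Y t \<in> borel_measurable M) \<and>
     (\<forall>(n::nat) (tt::nat \<Rightarrow> real) (a::nat \<Rightarrow> real). (\<forall>k<n. tt k \<ge> 0) \<longrightarrow>
        integral\<^sup>L M (\<lambda>\<omega>. cis (\<Sum>k<n. a k * Y (tt k) \<omega>)) =
        complex_of_real (exp (- (\<Sum>j<n. \<Sum>k<n. a j * a k * mbm_cov H (tt j) (tt k)) / 2)))"

end

theory Submission
  imports Defs "HOL-Probability.Probability"
begin

lemma std_normal_tail:
  fixes c :: real assumes c: "c \<ge> 0"
  shows "measure std_normal_distribution {y. c < \<bar>y\<bar>} \<le> sqrt 2 * exp (- c\<^sup>2 / 4)"
proof -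
  have eq: "std_normal_density y * exp ((y\<^sup>2 - c\<^sup>2) / 4) = sqrt 2 * exp (- c\<^sup>2 / 4) * normal_density 0 (sqrt 2) y" for y
  proof -
    have h1: "std_normal_density y * exp ((y\<^sup>2 - c\<^sup>2) / 4) = (exp (- y\<^sup>2 / 4) * exp (- c\<^sup>2 / 4)) / sqrt (2 * pi)"
      unfolding std_normal_density_def by (simp add: exp_add[symmetric] field_simps)
    have h2: "sqrt 2 * normal_density 0 (sqrt 2) y = exp (- y\<^sup>2 / 4) / sqrt (2 * pi)"
    proof -
      have "sqrt (4*pi) = sqrt 2 * sqrt (2 * pi)" by (simp add: real_sqrt_mult[symmetric])
      then show ?thesis unfolding normal_density_def by simp
    qed
    have "sqrt 2 * exp (- c\<^sup>2 / 4) * normal_density 0 (sqrt 2) y = (sqrt 2 * normal_density 0 (sqrt 2) y) * exp (- c\<^sup>2 / 4)"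
      by (simp only: ac_simps)
    also have "\<dots> = (exp (- y\<^sup>2 / 4) * exp (- c\<^sup>2 / 4)) / sqrt (2 * pi)"
      by (simp only: h2 times_divide_eq_left)
    finally show ?thesis using h1 by simp
  qed
  have "emeasure std_normal_distribution {y. c < \<bar>y\<bar>} = (\<integral>\<^sup>+ y. ennreal (std_normal_density y) * indicator {y. c < \<bar>y\<bar>} y \<partial>lborel)"
    by (subst emeasure_density) auto
  also have "\<dots> \<le> (\<integral>\<^sup>+ y. ennreal (sqrt 2 * exp (- c\<^sup>2 / 4) * normal_density 0 (sqrt 2) y) \<partial>lborel)"
  proof (rule nn_integral_mono)
    fix y
    show "ennreal (std_normal_density y) * indicator {y. c < \<bar>y\<bar>} y \<le> ennreal (sqrt 2 * exp (- c\<^sup>2 / 4) * normal_density 0 (sqrt 2) y)"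
    proof (cases "c < \<bar>y\<bar>")
      case True
      then have "c\<^sup>2 \<le> \<bar>y\<bar>\<^sup>2" using c by (intro power_mono) auto
      then have "c\<^sup>2 \<le> y\<^sup>2" by simp
      then have e1: "1 \<le> exp ((y\<^sup>2 - c\<^sup>2) / 4)" by simp
      have "std_normal_density y \<le> std_normal_density y * exp ((y\<^sup>2 - c\<^sup>2) / 4)"
        using mult_left_mono[OF e1 normal_density_nonneg[of 0 1 y]] by simp
      then show ?thesis using True eq[of y] by (simp add: indicator_def)
    qed (simp add: indicator_def)
  qed
  also have "\<dots> = ennreal (sqrt 2 * exp (- c\<^sup>2 / 4)) * (\<integral>\<^sup>+ y. ennreal (normal_density 0 (sqrt 2) y) \<partial>lborel)"
    by (subst nn_integral_cmult[symmetric]) (auto simp: ennreal_mult)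
  also have "(\<integral>\<^sup>+ y. ennreal (normal_density 0 (sqrt 2) y) \<partial>lborel) = 1"
    by (subst nn_integral_eq_integral) auto
  finally have "emeasure std_normal_distribution {y. c < \<bar>y\<bar>} \<le> ennreal (sqrt 2 * exp (- c\<^sup>2 / 4))" by simp
  then show ?thesis unfolding measure_def by (simp add: enn2real_leI)
qed

lemma gauss_tail:
  assumes P: "prob_space M" and X[measurable]: "X \<in> borel_measurable M"
    and ch: "\<And>\<theta>. (\<integral>\<omega>. cis (\<theta> * X \<omega>) \<partial>M) = complex_of_real (exp (- (\<theta>\<^sup>2 * v) / 2))"
  shows "0 \<le> v"
    and "\<And>x V. 0 < x \<Longrightarrow> v \<le> V \<Longrightarrow> 0 < V \<Longrightarrow>
          measure M {\<omega>\<in>space M. x < \<bar>X \<omega>\<bar>} \<le> 2 * exp (- x\<^sup>2 / (4 * V))"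
proof -
  interpret prob_space M by (rule P)
  have "norm (\<integral>\<omega>. cis (1 * X \<omega>) \<partial>M) \<le> (\<integral>\<omega>. norm (cis (1 * X \<omega>)) \<partial>M)"
    by (rule integral_norm_bound)
  then have "exp (- v / 2) \<le> 1" using ch[of 1] by (simp add: prob_space)
  then show v0: "0 \<le> v" by simp
  define \<sigma> where "\<sigma> = sqrt v"
  have s0: "0 \<le> \<sigma>" and s2: "\<sigma>\<^sup>2 = v" using v0 by (auto simp: \<sigma>_def)
  let ?N = std_normal_distribution
  define D1 where "D1 = distr M borel X"
  define D2 where "D2 = distr ?N borel (\<lambda>y. \<sigma> * y)"
  interpret N: real_distribution ?N by (rule real_dist_normal_dist)
  have rd1: "real_distribution D1" unfolding D1_def by simp
  have rd2: "real_distribution D2" unfolding D2_def by (intro N.real_distribution_distr) simp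
  have "char D1 = char D2"
  proof
    fix \<theta>
    have "char D1 \<theta> = (\<integral>\<omega>. cis (\<theta> * X \<omega>) \<partial>M)"
      unfolding D1_def char_def by (simp add: integral_distr cis_conv_exp)
    also have "\<dots> = complex_of_real (exp (- ((\<theta> * \<sigma>)\<^sup>2) / 2))"
      by (simp add: ch power_mult_distrib s2)
    also have "\<dots> = char ?N (\<theta> * \<sigma>)" by (simp add: char_std_normal_distribution)
    also have "\<dots> = char D2 \<theta>"
      unfolding D2_def char_def by (simp add: integral_distr ac_simps)
    finally show "char D1 \<theta> = char D2 \<theta>" .
  qed
  then have D12: "D1 = D2" using Levy_uniqueness rd1 rd2 by blast
  fix x V :: real assume x: "0 < x" and V: "v \<le> V" "0 < V"
  have "measure M {\<omega>\<in>space M. x < \<bar>X \<omega>\<bar>} = measure D1 {y. x < \<bar>y\<bar>}"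
    unfolding D1_def by (subst measure_distr) (auto intro!: arg_cong[where f="measure M"])
  also have "\<dots> = measure ?N {y. x < \<bar>\<sigma> * y\<bar>}"
    unfolding D12 D2_def by (subst measure_distr) (auto intro!: arg_cong[where f="measure ?N"])
  also have "\<dots> \<le> 2 * exp (- x\<^sup>2 / (4 * V))"
  proof (cases "\<sigma> = 0")
    case True
    then show ?thesis using x by simp
  next
    case False
    then have sp: "0 < \<sigma>" using s0 by simp
    have "{y. x < \<bar>\<sigma> * y\<bar>} = {y. x / \<sigma> < \<bar>y\<bar>}"
      using sp by (auto simp: abs_mult field_simps)
    then have "measure ?N {y. x < \<bar>\<sigma> * y\<bar>} \<le> sqrt 2 * exp (- (x / \<sigma>)\<^sup>2 / 4)"
      using std_normal_tail[of "x / \<sigma>"] x sp by simp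
    also have "(x / \<sigma>)\<^sup>2 = x\<^sup>2 / v" using s2 by (simp add: power_divide)
    also have "sqrt 2 * exp (- (x\<^sup>2 / v) / 4) \<le> 2 * exp (- x\<^sup>2 / (4 * V))"
    proof (rule mult_mono)
      show "sqrt 2 \<le> 2" by (rule real_le_lsqrt) auto
      have "x\<^sup>2 / V \<le> x\<^sup>2 / v" using V sp s2 by (intro divide_left_mono) auto
      then show "exp (- (x\<^sup>2 / v) / 4) \<le> exp (- x\<^sup>2 / (4 * V))" by simp
    qed auto
    finally show ?thesis .
  qed
  finally show "measure M {\<omega>\<in>space M. x < \<bar>X \<omega>\<bar>} \<le> 2 * exp (- x\<^sup>2 / (4 * V))" .
qed

definition mm :: "real \<Rightarrow> real" where "mm y = (min 2 \<bar>y\<bar>)\<^sup>2"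

lemma mm_nonneg: "0 \<le> mm y" by (simp add: mm_def)
lemma mm_abs: "mm \<bar>y\<bar> = mm y" by (simp add: mm_def)
lemma mm_le4: "mm y \<le> 4"
proof -
  have "min 2 \<bar>y\<bar> \<le> 2" by simp
  then have "(min 2 \<bar>y\<bar>)\<^sup>2 \<le> 2\<^sup>2" by (intro power_mono) auto
  then show ?thesis by (simp add: mm_def)
qed
lemma mm_small: "\<bar>y\<bar> \<le> 2 \<Longrightarrow> mm y = y\<^sup>2" by (simp add: mm_def min_def)
lemma mm_mono: "\<bar>x\<bar> \<le> \<bar>y\<bar> \<Longrightarrow> mm x \<le> mm y"
  unfolding mm_def by (intro power_mono) auto
lemma mm_measurable[measurable]: "mm \<in> borel_measurable borel"
  unfolding mm_def by measurable

lemma cis_m1: "cmod (cis \<theta> - 1) \<le> min 2 \<bar>\<theta>\<bar>"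
proof -
  have "cmod (cis \<theta> - 1) \<le> cmod (cis \<theta>) + cmod 1" by (rule norm_triangle_ineq4)
  then have a: "cmod (cis \<theta> - 1) \<le> 2" by simp
  have "cmod (exp (\<i> * complex_of_real \<theta>) - 1) \<le> \<bar>\<theta>\<bar>"
    using iexp_approx1[of \<theta> 0] by simp
  then have b: "cmod (cis \<theta> - 1) \<le> \<bar>\<theta>\<bar>" by (simp add: cis_conv_exp)
  show ?thesis using a b by simp
qed

lemma cis_m1_sq: "(cmod (cis \<theta> - 1))\<^sup>2 \<le> mm \<theta>"
  unfolding mm_def by (intro power_mono cis_m1) simp

lemma exp_diff_le: fixes p q :: real shows "\<bar>exp p - exp q\<bar> \<le> \<bar>p - q\<bar> * (exp p + exp q)"
proof -
  have *: "exp b - exp a \<le> (b - a) * (exp a + exp b)" if "a \<le> b" for a b :: real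
  proof -
    have "1 + (a - b) \<le> exp (a - b)" by (rule exp_ge_add_one_self)
    then have "exp b * (1 + (a - b)) \<le> exp b * exp (a - b)" by simp
    then have "exp b - exp a \<le> (b - a) * exp b" by (simp add: exp_diff algebra_simps)
    also have "\<dots> \<le> (b - a) * (exp a + exp b)" using that by (intro mult_left_mono) auto
    finally show ?thesis .
  qed
  show ?thesis
  proof (cases "p \<le> q")
    case True
    then show ?thesis using *[OF True] by (simp add: abs_if)
  next
    case False
    then show ?thesis using *[of q p] by (simp add: abs_if add.commute)
  qed
qed

lemma ln_abs_bound:
  fixes x e :: real
  assumes "0 < x" "0 < e"
  shows "\<bar>ln x\<bar> \<le> (x powr e + x powr (-e)) / e"
proof -
  have a: "e * ln x \<le> x powr e" using ln_le_minus_one[of "x powr e"] assms by simp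
  have b: "- e * ln x \<le> x powr (-e)" using ln_le_minus_one[of "x powr (-e)"] assms by simp
  have p1: "0 \<le> x powr e" "0 \<le> x powr (-e)" by auto
  have "e * \<bar>ln x\<bar> \<le> x powr e + x powr (-e)"
  proof (cases "0 \<le> ln x")
    case True then show ?thesis using a p1 by linarith
  next
    case False then show ?thesis using b p1 by linarith
  qed
  then show ?thesis using assms by (simp add: field_simps)
qed

lemma nn_even_le:
  fixes f :: "real \<Rightarrow> ennreal"
  assumes [measurable]: "f \<in> borel_measurable borel"
  shows "(\<integral>\<^sup>+x. f \<bar>x\<bar> \<partial>lborel) \<le> 2 * (\<integral>\<^sup>+x. f x * indicator {0..} x \<partial>lborel)"
proof -
  have "(\<integral>\<^sup>+x. f \<bar>x\<bar> \<partial>lborel) \<le> (\<integral>\<^sup>+x. f x * indicator {0..} x + f (-x) * indicator {..0} x \<partial>lborel)"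
    by (intro nn_integral_mono) (auto simp: indicator_def abs_if)
  also have "\<dots> = (\<integral>\<^sup>+x. f x * indicator {0..} x \<partial>lborel) + (\<integral>\<^sup>+x. f (-x) * indicator {..0} x \<partial>lborel)"
    by (intro nn_integral_add) auto
  also have "(\<integral>\<^sup>+x. f (-x) * indicator {..0} x \<partial>lborel) = (\<integral>\<^sup>+x. f x * indicator {0..} x \<partial>lborel)"
  proof -
    have "(\<integral>\<^sup>+x. f x * indicator {0..} x \<partial>lborel) = ennreal \<bar>-1\<bar> * (\<integral>\<^sup>+x. f (0 + -1 * x) * indicator {0..} (0 + -1 * x) \<partial>lborel)"
      by (rule nn_integral_real_affine) auto
    also have "\<dots> = (\<integral>\<^sup>+x. f (-x) * indicator {..0} x \<partial>lborel)"
      by (simp add: indicator_def)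
    finally show ?thesis by simp
  qed
  finally show ?thesis by (simp add: mult_2)
qed

definition Jc :: "real \<Rightarrow> real \<Rightarrow> real" where "Jc c1 c2 = 2 / (2 - c2) + 8 / c1"

lemma J_base:
  assumes c: "0 < c1" "c1 \<le> c" "c \<le> c2" "c2 < 2"
  shows "(\<integral>\<^sup>+x. ennreal (mm x * \<bar>x\<bar> powr (-(c+1))) \<partial>lborel) \<le> ennreal (Jc c1 c2)"
proof -
  define g where "g x = ennreal (mm x * x powr (-(c+1)))" for x
  have gm[measurable]: "g \<in> borel_measurable borel" unfolding g_def by measurable
  have "(\<integral>\<^sup>+x. ennreal (mm x * \<bar>x\<bar> powr (-(c+1))) \<partial>lborel) = (\<integral>\<^sup>+x. g \<bar>x\<bar> \<partial>lborel)"
    unfolding g_def by (simp add: mm_abs)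
  also have "\<dots> \<le> 2 * (\<integral>\<^sup>+x. g x * indicator {0..} x \<partial>lborel)"
    by (rule nn_even_le) (rule gm)
  also have "(\<integral>\<^sup>+x. g x * indicator {0..} x \<partial>lborel) \<le>
      (\<integral>\<^sup>+x. ennreal (x powr (1 - c2)) * indicator {0..1} x + ennreal (4 * x powr (-(c1+1))) * indicator {1..} x \<partial>lborel)"
  proof (intro nn_integral_mono)
    fix x :: real
    show "g x * indicator {0..} x \<le> ennreal (x powr (1 - c2)) * indicator {0..1} x + ennreal (4 * x powr (-(c1+1))) * indicator {1..} x"
    proof (cases "x \<le> 0")
      case True
      then show ?thesis by (cases "x = 0") (auto simp: g_def indicator_def)
    next
      case False
      then have x: "0 < x" by simp
      show ?thesis
      proof (cases "x \<le> 1")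
        case True
        have "mm x * x powr (-(c+1)) = x powr 2 * x powr (-(c+1))"
          using x True by (simp add: mm_small powr_numeral)
        also have "\<dots> = x powr (2 + -(c+1))" by (rule powr_add[symmetric])
        also have "\<dots> = x powr (1 - c)" by (rule arg_cong[where f="\<lambda>p. x powr p"]) simp
        also have "\<dots> \<le> x powr (1 - c2)" using x True c by (intro powr_mono') auto
        finally have "g x \<le> ennreal (x powr (1 - c2))" unfolding g_def by (intro ennreal_leI)
        then have "g x * indicator {0..} x \<le> ennreal (x powr (1 - c2)) * indicator {0..1} x"
          using x True by (simp add: indicator_def)
        also have "\<dots> \<le> ennreal (x powr (1 - c2)) * indicator {0..1} x + ennreal (4 * x powr (-(c1+1))) * indicator {1..} x"
          by (rule add_increasing2) auto
        finally show ?thesis .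
      next
        case False
        have "mm x * x powr (-(c+1)) \<le> 4 * x powr (-(c1+1))"
          using x False c by (intro mult_mono mm_le4 powr_mono) auto
        then have "g x \<le> ennreal (4 * x powr (-(c1+1)))" unfolding g_def by (intro ennreal_leI)
        then show ?thesis using x False by (auto simp: indicator_def)
      qed
    qed
  qed
  also have "\<dots> = (\<integral>\<^sup>+x. ennreal (x powr (1 - c2)) * indicator {0..1} x \<partial>lborel) + (\<integral>\<^sup>+x. ennreal (4 * x powr (-(c1+1))) * indicator {1..} x \<partial>lborel)"
    by (intro nn_integral_add) auto
  also have "(\<integral>\<^sup>+x. ennreal (x powr (1 - c2)) * indicator {0..1} x \<partial>lborel) = ennreal (1 / (2 - c2))"
  proof -
    have "((\<lambda>x. x powr (1 - c2)) has_integral (1 powr (1 - c2 + 1) / (1 - c2 + 1))) {0..1}"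
      using c by (intro has_integral_powr_from_0) auto
    then have "((\<lambda>x. x powr (1 - c2)) has_integral (1 / (2 - c2))) {0..1}" by simp
    then show ?thesis by (intro nn_integral_has_integral_lebesgue') auto
  qed
  also have "(\<integral>\<^sup>+x. ennreal (4 * x powr (-(c1+1))) * indicator {1..} x \<partial>lborel) = ennreal (4 / c1)"
  proof -
    have "((\<lambda>x. x powr (-(c1+1))) has_integral (-(1 powr (-(c1+1)+1)) / (-(c1+1)+1))) {1..}"
      using c by (intro has_integral_powr_to_inf) auto
    then have "((\<lambda>x. x powr (-(c1+1))) has_integral (1 / c1)) {1..}" by simp
    then have "((\<lambda>x. 4 * x powr (-(c1+1))) has_integral (4 * (1 / c1))) {1..}"
      by (rule has_integral_mult_right)
    then show ?thesis by (intro nn_integral_has_integral_lebesgue') auto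
  qed
  finally have "(\<integral>\<^sup>+x. ennreal (mm x * \<bar>x\<bar> powr (-(c+1))) \<partial>lborel) \<le> 2 * (ennreal (1 / (2 - c2)) + ennreal (4 / c1))"
    by (simp add: mult_left_mono)
  also have "ennreal (1 / (2 - c2)) + ennreal (4 / c1) = ennreal (1 / (2 - c2) + 4 / c1)"
    using c by (intro ennreal_plus[symmetric]) auto
  also have "2 * ennreal (1 / (2 - c2) + 4 / c1) = ennreal (2 * (1 / (2 - c2) + 4 / c1))"
    using c ennreal_mult[of 2 "1 / (2 - c2) + 4 / c1"] by simp
  also have "2 * (1 / (2 - c2) + 4 / c1) = Jc c1 c2" by (simp add: Jc_def)
  finally show ?thesis .
qed

lemma J_bound:
  assumes c: "0 < c1" "c1 \<le> c" "c \<le> c2" "c2 < 2" and d: "0 \<le> \<delta>"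
  shows "(\<integral>\<^sup>+u. ennreal (mm (\<delta> * u) * \<bar>u\<bar> powr (-(c+1))) \<partial>lborel) \<le> ennreal (Jc c1 c2 * \<delta> powr c)"
proof (cases "\<delta> = 0")
  case True
  then show ?thesis by (simp add: mm_def)
next
  case False
  then have dp: "0 < \<delta>" using d by simp
  define G where "G x = ennreal (mm x * \<bar>x\<bar> powr (-(c+1)))" for x
  have Gm[measurable]: "G \<in> borel_measurable borel" unfolding G_def by measurable
  have JcP: "0 \<le> Jc c1 c2" using c by (simp add: Jc_def)
  have aff: "(\<integral>\<^sup>+x. G x \<partial>lborel) = ennreal \<bar>\<delta>\<bar> * (\<integral>\<^sup>+u. G (0 + \<delta> * u) \<partial>lborel)"
    using False by (intro nn_integral_real_affine) auto
  have pw: "ennreal (mm (\<delta> * u) * \<bar>u\<bar> powr (-(c+1))) = ennreal (\<delta> powr (c+1)) * G (\<delta> * u)" for u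
  proof (cases "u = 0")
    case True then show ?thesis by (simp add: G_def)
  next
    case False
    have "\<bar>\<delta> * u\<bar> powr (-(c+1)) = \<delta> powr (-(c+1)) * \<bar>u\<bar> powr (-(c+1))"
      using dp by (simp add: abs_mult powr_mult)
    moreover have "\<delta> powr (c+1) * \<delta> powr (-(c+1)) = 1"
      using dp by (simp add: powr_add[symmetric])
    ultimately have "mm (\<delta> * u) * \<bar>u\<bar> powr (-(c+1)) = \<delta> powr (c+1) * (mm (\<delta> * u) * \<bar>\<delta> * u\<bar> powr (-(c+1)))"
      by (simp add: algebra_simps)
    then show ?thesis unfolding G_def using mm_nonneg[of "\<delta> * u"]
      by (simp add: ennreal_mult[symmetric])
  qed
  have "(\<integral>\<^sup>+u. ennreal (mm (\<delta> * u) * \<bar>u\<bar> powr (-(c+1))) \<partial>lborel) = (\<integral>\<^sup>+u. ennreal (\<delta> powr (c+1)) * G (\<delta> * u) \<partial>lborel)"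
    by (rule nn_integral_cong) (rule pw)
  also have "\<dots> = ennreal (\<delta> powr (c+1)) * (\<integral>\<^sup>+u. G (\<delta> * u) \<partial>lborel)"
    by (rule nn_integral_cmult) measurable
  also have "ennreal (\<delta> powr (c+1)) = ennreal (\<delta> powr c) * ennreal \<delta>"
    using dp by (simp add: powr_add ennreal_mult)
  also have "ennreal (\<delta> powr c) * ennreal \<delta> * (\<integral>\<^sup>+u. G (\<delta> * u) \<partial>lborel) = ennreal (\<delta> powr c) * (\<integral>\<^sup>+x. G x \<partial>lborel)"
    using aff dp by (simp add: mult.assoc)
  also have "\<dots> \<le> ennreal (\<delta> powr c) * ennreal (Jc c1 c2)"
    using J_base[OF c] unfolding G_def by (intro mult_left_mono) auto
  also have "\<dots> = ennreal (Jc c1 c2 * \<delta> powr c)"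
    using JcP by (simp add: ennreal_mult[symmetric] mult.commute)
  finally show ?thesis .
qed

definition Af :: "real \<Rightarrow> real \<Rightarrow> complex" where "Af t u = cis (t * u) - 1"
definition xf :: "real \<Rightarrow> real \<Rightarrow> real" where "xf a u = \<bar>u\<bar> powr (-(a + 1/2))"
definition gf :: "real \<Rightarrow> real \<Rightarrow> real \<Rightarrow> complex" where "gf t a u = Af t u * complex_of_real (xf a u)"
definition ci :: "real \<Rightarrow> real \<Rightarrow> real \<Rightarrow> real \<Rightarrow> real \<Rightarrow> real" where
  "ci t s a b u = Re ((cis (t * u) - 1) * cnj (cis (s * u) - 1)) / \<bar>u\<bar> powr (a + b + 1)"

lemma ci_measurable[measurable]: "ci t s a b \<in> borel_measurable borel"
  unfolding ci_def by (simp add: cis_conv_exp) measurable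

lemma gf_measurable[measurable]: "(\<lambda>u. (cmod (gf t a u - gf s b u))\<^sup>2) \<in> borel_measurable borel"
  unfolding gf_def Af_def xf_def by (simp add: cis_conv_exp) measurable

lemma Af0: "Af t 0 = 0" by (simp add: Af_def)

lemma ci_eq: "ci t s a b u = Re (gf t a u * cnj (gf s b u))"
proof (cases "u = 0")
  case True then show ?thesis by (simp add: ci_def gf_def Af0)
next
  case False
  then have up: "0 < \<bar>u\<bar>" by simp
  have ee: "a + b + 1 = (a + 1/2) + (b + 1/2)" by simp
  have "\<bar>u\<bar> powr (a + b + 1) = \<bar>u\<bar> powr (a + 1/2) * \<bar>u\<bar> powr (b + 1/2)"
    by (simp only: ee powr_add)
  moreover have "xf a u = inverse (\<bar>u\<bar> powr (a + 1/2))" "xf b u = inverse (\<bar>u\<bar> powr (b + 1/2))"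
    unfolding xf_def by (rule powr_minus)+
  ultimately show ?thesis
    unfolding ci_def gf_def Af_def by (simp add: field_simps)
qed

lemma re_cnj_sym: "Re (z * cnj w) = Re (w * cnj z)"
  by (simp add: algebra_simps)

lemma cmod_diff_sq: "(cmod (z - w))\<^sup>2 = Re (z * cnj z) - 2 * Re (z * cnj w) + Re (w * cnj w)"
  unfolding cmod_power2 by (simp add: algebra_simps power2_eq_square)

lemma ci_comb: "ci t t a a u - 2 * ci t s a b u + ci s s b b u = (cmod (gf t a u - gf s b u))\<^sup>2"
  by (simp add: ci_eq cmod_diff_sq)

lemma ci_sym: "ci t s a b u = ci s t b a u"
  by (simp add: ci_eq re_cnj_sym[of "gf t a u"])

lemma Af_bound: "0 \<le> t \<Longrightarrow> cmod (Af t u) \<le> min 2 (t * \<bar>u\<bar>)"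
  using cis_m1[of "t * u"] by (simp add: Af_def abs_mult)

lemma ci_bound:
  assumes "0 \<le> t" "0 \<le> s" "T = max t s"
  shows "\<bar>ci t s a b u\<bar> \<le> mm (T * u) * \<bar>u\<bar> powr (-(a + b + 1))"
proof (cases "u = 0")
  case True then show ?thesis by (simp add: ci_def mm_def)
next
  case False
  have T: "0 \<le> T" "t \<le> T" "s \<le> T" using assms by auto
  have "\<bar>ci t s a b u\<bar> = \<bar>Re (Af t u * cnj (Af s u))\<bar> * \<bar>u\<bar> powr (-(a + b + 1))"
    unfolding ci_def Af_def powr_minus_divide by (simp add: abs_divide)
  also have "\<bar>Re (Af t u * cnj (Af s u))\<bar> \<le> cmod (Af t u) * cmod (Af s u)"
    using abs_Re_le_cmod[of "Af t u * cnj (Af s u)"] by (simp add: norm_mult)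
  also have "cmod (Af t u) * cmod (Af s u) \<le> min 2 (T * \<bar>u\<bar>) * min 2 (T * \<bar>u\<bar>)"
  proof (intro mult_mono)
    show "cmod (Af t u) \<le> min 2 (T * \<bar>u\<bar>)"
      using Af_bound[of t u] T mult_right_mono[of t T "\<bar>u\<bar>"] assms by auto
    show "cmod (Af s u) \<le> min 2 (T * \<bar>u\<bar>)"
      using Af_bound[of s u] T mult_right_mono[of s T "\<bar>u\<bar>"] assms by auto
  qed (use T in auto)
  also have "min 2 (T * \<bar>u\<bar>) * min 2 (T * \<bar>u\<bar>) = mm (T * u)"
    using T by (simp add: mm_def power2_eq_square abs_mult)
  finally show ?thesis by (simp add: mult_right_mono)
qed

lemma ci_integrable:
  assumes "0 \<le> t" "0 \<le> s" "0 < a + b" "a + b < 2"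
  shows "integrable lborel (ci t s a b)"
proof (rule integrableI_bounded)
  show "ci t s a b \<in> borel_measurable lborel" by simp
  have "(\<integral>\<^sup>+u. ennreal (norm (ci t s a b u)) \<partial>lborel) \<le> (\<integral>\<^sup>+u. ennreal (mm (max t s * u) * \<bar>u\<bar> powr (-((a + b) + 1))) \<partial>lborel)"
    using ci_bound[OF assms(1,2) refl] by (intro nn_integral_mono ennreal_leI) (simp add: add.assoc)
  also have "\<dots> \<le> ennreal (Jc (a+b) (a+b) * max t s powr (a + b))"
    using assms by (intro J_bound) auto
  finally show "(\<integral>\<^sup>+u. ennreal (norm (ci t s a b u)) \<partial>lborel) < \<infinity>"
    by (simp add: le_less_trans)
qed

lemma cov_ci: "mbm_cov H t s = (1 / (2 * pi)) * integral\<^sup>L lborel (ci t s (H t) (H s))"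
  unfolding mbm_cov_def ci_def by simp

lemma incvar_eq:
  assumes "0 \<le> t" "0 \<le> s" "0 < H t" "H t < 1" "0 < H s" "H s < 1"
  shows "mbm_cov H t t - 2 * mbm_cov H t s + mbm_cov H s s =
           (1 / (2 * pi)) * integral\<^sup>L lborel (\<lambda>u. (cmod (gf t (H t) u - gf s (H s) u))\<^sup>2)"
proof -
  have i1: "integrable lborel (ci t t (H t) (H t))" using assms by (intro ci_integrable) auto
  have i2: "integrable lborel (ci t s (H t) (H s))" using assms by (intro ci_integrable) auto
  have i3: "integrable lborel (ci s s (H s) (H s))" using assms by (intro ci_integrable) auto
  have "integral\<^sup>L lborel (\<lambda>u. (cmod (gf t (H t) u - gf s (H s) u))\<^sup>2) =
        integral\<^sup>L lborel (\<lambda>u. ci t t (H t) (H t) u - 2 * ci t s (H t) (H s) u + ci s s (H s) (H s) u)"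
    by (simp add: ci_comb)
  also have "\<dots> = integral\<^sup>L lborel (ci t t (H t) (H t)) - 2 * integral\<^sup>L lborel (ci t s (H t) (H s)) + integral\<^sup>L lborel (ci s s (H s) (H s))"
    using i1 i2 i3 by simp
  finally have eq: "integral\<^sup>L lborel (\<lambda>u. (cmod (gf t (H t) u - gf s (H s) u))\<^sup>2) = integral\<^sup>L lborel (ci t t (H t) (H t)) - 2 * integral\<^sup>L lborel (ci t s (H t) (H s)) + integral\<^sup>L lborel (ci s s (H s) (H s))" .
  show ?thesis unfolding cov_ci eq by (simp add: algebra_simps)
qed

lemma incvar_integrable:
  assumes "0 \<le> t" "0 \<le> s" "0 < H t" "H t < 1" "0 < H s" "H s < 1"
  shows "integrable lborel (\<lambda>u. (cmod (gf t (H t) u - gf s (H s) u))\<^sup>2)"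
proof -
  have i1: "integrable lborel (ci t t (H t) (H t))" using assms by (intro ci_integrable) auto
  have i2: "integrable lborel (ci t s (H t) (H s))" using assms by (intro ci_integrable) auto
  have i3: "integrable lborel (ci s s (H s) (H s))" using assms by (intro ci_integrable) auto
  have "integrable lborel (\<lambda>u. ci t t (H t) (H t) u - 2 * ci t s (H t) (H s) u + ci s s (H s) (H s) u)"
    using i1 i2 i3 by simp
  then show ?thesis by (simp add: ci_comb)
qed

lemma sq_sum_le: "(p + q)\<^sup>2 \<le> 2 * p\<^sup>2 + 2 * (q::real)\<^sup>2"
proof -
  have "0 \<le> (p - q)\<^sup>2" by simp
  then show ?thesis by (simp add: power2_eq_square algebra_simps)
qed

lemma powr_sq: "0 < (X::real) \<Longrightarrow> (X powr p)\<^sup>2 = X powr (2 * p)"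
  by (simp add: power2_eq_square powr_add[symmetric])

lemma pw_bound:
  fixes a b e s t u :: real
  assumes st: "0 \<le> s" "s \<le> t" and e: "0 < e"
  shows "(cmod (gf t a u - gf s b u))\<^sup>2 \<le> 2 * mm ((t - s) * u) * \<bar>u\<bar> powr (-(2*a+1))
     + 8 / e\<^sup>2 * (a - b)\<^sup>2 * mm (s * u) * (\<bar>u\<bar> powr (-((2*a-2*e)+1)) + \<bar>u\<bar> powr (-((2*a+2*e)+1))
         + \<bar>u\<bar> powr (-((2*b-2*e)+1)) + \<bar>u\<bar> powr (-((2*b+2*e)+1)))"
proof (cases "u = 0")
  case True then show ?thesis by (simp add: gf_def Af0)
next
  case False
  define X where "X = \<bar>u\<bar>"
  have X: "0 < X" using False by (simp add: X_def)
  define xt where "xt = xf a u"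
  define xs where "xs = xf b u"
  define L where "L = ln X"
  define E1 where "E1 = X powr (2 * e)"
  define E2 where "E2 = X powr (- 2 * e)"
  define yt where "yt = X powr (-(2*a+1))"
  define ys where "ys = X powr (-(2*b+1))"
  have xt0: "0 \<le> xt" and xs0: "0 \<le> xs" by (simp_all add: xt_def xs_def xf_def)
  have E0: "0 \<le> E1" "0 \<le> E2" by (simp_all add: E1_def E2_def)
  have y0: "0 \<le> yt" "0 \<le> ys" by (simp_all add: yt_def ys_def)
  have xt_exp: "xt = exp (-(a + 1/2) * L)" using X by (simp add: xt_def xf_def X_def L_def powr_def)
  have xs_exp: "xs = exp (-(b + 1/2) * L)" using X by (simp add: xs_def xf_def X_def L_def powr_def)
  have xt2: "xt\<^sup>2 = yt" unfolding xt_def xf_def yt_def X_def[symmetric] using X by (simp add: powr_sq)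
  have xs2: "xs\<^sup>2 = ys" unfolding xs_def xf_def ys_def X_def[symmetric] using X by (simp add: powr_sq)
  have dec: "gf t a u - gf s b u = (Af t u - Af s u) * complex_of_real xt + Af s u * complex_of_real (xt - xs)"
    unfolding gf_def xt_def xs_def by (simp add: algebra_simps)
  have Ats: "Af t u - Af s u = cis (s * u) * (cis ((t - s) * u) - 1)"
    unfolding Af_def by (simp add: algebra_simps cis_mult)
  have nA: "cmod (Af t u - Af s u) = cmod (cis ((t - s) * u) - 1)"
    unfolding Ats by (simp add: norm_mult)
  define P where "P = cmod (cis ((t - s) * u) - 1) * xt"
  define Q where "Q = cmod (Af s u) * \<bar>xt - xs\<bar>"
  have P0: "0 \<le> P" using xt0 by (simp add: P_def)
  have Q0: "0 \<le> Q" by (simp add: Q_def)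
  have "cmod (gf t a u - gf s b u) \<le> cmod ((Af t u - Af s u) * complex_of_real xt) + cmod (Af s u * complex_of_real (xt - xs))"
    unfolding dec by (rule norm_triangle_ineq)
  also have "\<dots> = P + Q" unfolding P_def Q_def norm_mult nA norm_of_real using xt0 by simp
  finally have n1: "cmod (gf t a u - gf s b u) \<le> P + Q" .
  have "(cmod (gf t a u - gf s b u))\<^sup>2 \<le> (P + Q)\<^sup>2" using n1 by (intro power_mono) auto
  also have "\<dots> \<le> 2 * P\<^sup>2 + 2 * Q\<^sup>2" by (rule sq_sum_le)
  finally have step1: "(cmod (gf t a u - gf s b u))\<^sup>2 \<le> 2 * P\<^sup>2 + 2 * Q\<^sup>2" .
  have "P\<^sup>2 = (cmod (cis ((t - s) * u) - 1))\<^sup>2 * yt" unfolding P_def by (simp add: power_mult_distrib xt2)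
  also have "\<dots> \<le> mm ((t - s) * u) * yt" using y0 by (intro mult_right_mono cis_m1_sq) auto
  finally have Pb: "P\<^sup>2 \<le> mm ((t - s) * u) * yt" .
  have L2: "L\<^sup>2 \<le> 2 * (E1 + E2) / e\<^sup>2"
  proof -
    have "\<bar>L\<bar> \<le> (X powr e + X powr (-e)) / e" unfolding L_def by (rule ln_abs_bound[OF X e])
    then have "\<bar>L\<bar>\<^sup>2 \<le> ((X powr e + X powr (-e)) / e)\<^sup>2" by (intro power_mono) auto
    also have "\<dots> = (X powr e + X powr (-e))\<^sup>2 / e\<^sup>2" by (simp add: power_divide)
    also have "\<dots> \<le> (2 * (X powr e)\<^sup>2 + 2 * (X powr (-e))\<^sup>2) / e\<^sup>2"
      by (intro divide_right_mono sq_sum_le) auto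
    also have "(X powr e)\<^sup>2 = E1" unfolding E1_def using X by (simp add: powr_sq)
    also have "(X powr (-e))\<^sup>2 = E2" unfolding E2_def using X by (simp add: powr_sq)
    finally show ?thesis by (simp add: algebra_simps)
  qed
  have dxx: "\<bar>xt - xs\<bar> \<le> \<bar>a - b\<bar> * \<bar>L\<bar> * (xt + xs)"
  proof -
    have "\<bar>xt - xs\<bar> \<le> \<bar>-(a + 1/2) * L - -(b + 1/2) * L\<bar> * (xt + xs)"
      unfolding xt_exp xs_exp by (rule exp_diff_le)
    also have "\<bar>-(a + 1/2) * L - -(b + 1/2) * L\<bar> = \<bar>a - b\<bar> * \<bar>L\<bar>"
      by (simp add: abs_mult[symmetric] algebra_simps)
    finally show ?thesis .
  qed
  have "(xt - xs)\<^sup>2 = \<bar>xt - xs\<bar>\<^sup>2" by simp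
  also have "\<dots> \<le> (\<bar>a - b\<bar> * \<bar>L\<bar> * (xt + xs))\<^sup>2" using dxx by (intro power_mono) auto
  also have "\<dots> = (a - b)\<^sup>2 * L\<^sup>2 * (xt + xs)\<^sup>2" by (simp add: power_mult_distrib)
  also have "\<dots> \<le> (a - b)\<^sup>2 * (2 * (E1 + E2) / e\<^sup>2) * (2 * yt + 2 * ys)"
  proof (intro mult_mono mult_left_mono L2)
    show "(xt + xs)\<^sup>2 \<le> 2 * yt + 2 * ys" using sq_sum_le[of xt xs] xt2 xs2 by simp
  qed (use E0 e in auto)
  finally have dx2: "(xt - xs)\<^sup>2 \<le> (a - b)\<^sup>2 * (2 * (E1 + E2) / e\<^sup>2) * (2 * yt + 2 * ys)" .
  have "Q\<^sup>2 = (cmod (Af s u))\<^sup>2 * (xt - xs)\<^sup>2" unfolding Q_def by (simp add: power_mult_distrib)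
  also have "\<dots> \<le> mm (s * u) * ((a - b)\<^sup>2 * (2 * (E1 + E2) / e\<^sup>2) * (2 * yt + 2 * ys))"
    using cis_m1_sq[of "s * u"] dx2 by (intro mult_mono) (auto simp: Af_def mm_nonneg)
  finally have Qb: "Q\<^sup>2 \<le> mm (s * u) * ((a - b)\<^sup>2 * (2 * (E1 + E2) / e\<^sup>2) * (2 * yt + 2 * ys))" .
  have pe: "X powr p * X powr q = X powr r" if "p + q = r" for p q r
    using that by (simp add: powr_add[symmetric])
  have "(E1 + E2) * (yt + ys) = E1 * yt + E2 * yt + E1 * ys + E2 * ys" by (simp add: algebra_simps)
  also have "E1 * yt = X powr (-((2*a-2*e)+1))" unfolding E1_def yt_def by (rule pe) simp
  also have "E2 * yt = X powr (-((2*a+2*e)+1))" unfolding E2_def yt_def by (rule pe) simp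
  also have "E1 * ys = X powr (-((2*b-2*e)+1))" unfolding E1_def ys_def by (rule pe) simp
  also have "E2 * ys = X powr (-((2*b+2*e)+1))" unfolding E2_def ys_def by (rule pe) simp
  finally have four: "(E1 + E2) * (yt + ys) = X powr (-((2*a-2*e)+1)) + X powr (-((2*a+2*e)+1)) + X powr (-((2*b-2*e)+1)) + X powr (-((2*b+2*e)+1))" .
  have "2 * Q\<^sup>2 \<le> 2 * (mm (s * u) * ((a - b)\<^sup>2 * (2 * (E1 + E2) / e\<^sup>2) * (2 * yt + 2 * ys)))"
    using Qb by simp
  also have "\<dots> = 8 / e\<^sup>2 * (a - b)\<^sup>2 * mm (s * u) * ((E1 + E2) * (yt + ys))"
    by (simp add: field_simps)
  finally have Qc: "2 * Q\<^sup>2 \<le> 8 / e\<^sup>2 * (a - b)\<^sup>2 * mm (s * u) * ((E1 + E2) * (yt + ys))" .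
  show ?thesis using step1 Pb Qc unfolding four yt_def[symmetric] X_def[symmetric] by linarith
qed

lemma J_int:
  assumes c: "0 < c1" "c1 \<le> c" "c \<le> c2" "c2 < 2" and d: "0 \<le> \<delta>"
  shows "integrable lborel (\<lambda>u. mm (\<delta> * u) * \<bar>u\<bar> powr (-(c+1)))"
    and "integral\<^sup>L lborel (\<lambda>u. mm (\<delta> * u) * \<bar>u\<bar> powr (-(c+1))) \<le> Jc c1 c2 * \<delta> powr c"
proof -
  have m: "(\<lambda>u. mm (\<delta> * u) * \<bar>u\<bar> powr (-(c+1))) \<in> borel_measurable lborel" by measurable
  have nn: "0 \<le> mm (\<delta> * u) * \<bar>u\<bar> powr (-(c+1))" for u by (simp add: mm_nonneg)
  have JB: "(\<integral>\<^sup>+u. ennreal (mm (\<delta> * u) * \<bar>u\<bar> powr (-(c+1))) \<partial>lborel) \<le> ennreal (Jc c1 c2 * \<delta> powr c)"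
    by (rule J_bound[OF c d])
  show "integrable lborel (\<lambda>u. mm (\<delta> * u) * \<bar>u\<bar> powr (-(c+1)))"
  proof (rule integrableI_bounded[OF m])
    show "(\<integral>\<^sup>+u. ennreal (norm (mm (\<delta> * u) * \<bar>u\<bar> powr (-(c+1)))) \<partial>lborel) < \<infinity>"
      using JB nn by (simp add: le_less_trans)
  qed
  have JcP: "0 \<le> Jc c1 c2" using c by (simp add: Jc_def)
  show "integral\<^sup>L lborel (\<lambda>u. mm (\<delta> * u) * \<bar>u\<bar> powr (-(c+1))) \<le> Jc c1 c2 * \<delta> powr c"
    using JB JcP by (subst integral_eq_nn_integral[OF m AE_I2[OF nn]]) (auto intro!: enn2real_leI)
qed

lemma H2_ext:
  fixes H :: "real \<Rightarrow> real"
  assumes H_cont: "continuous_on {0..} H"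
    and H2: "\<forall>t s. 0 < s \<and> s \<le> t \<longrightarrow> \<bar>H t - H s\<bar> \<le> D * (t - s) powr \<kappa>"
    and k: "0 < \<kappa>"
    and st: "0 \<le> s" "s \<le> t"
  shows "\<bar>H t - H s\<bar> \<le> D * (t - s) powr \<kappa>"
proof (cases "0 < s")
  case True then show ?thesis using H2 st by auto
next
  case False
  then have s0: "s = 0" using st by simp
  show ?thesis
  proof (cases "t = 0")
    case True then show ?thesis using s0 by simp
  next
    case False
    then have tp: "0 < t" using st s0 by simp
    define f where "f x = \<bar>H t - H x\<bar> - D * (t - x) powr \<kappa>" for x
    have hc: "continuous_on {0..t} H" using H_cont by (rule continuous_on_subset) auto
    have hp: "continuous_on {0..t} (\<lambda>x. (t - x) powr \<kappa>)"
      using k by (intro continuous_on_powr' continuous_intros) auto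
    have c1: "continuous_on {0..t} (\<lambda>x. \<bar>H t - H x\<bar>)"
      by (intro continuous_on_rabs continuous_on_diff continuous_on_const hc)
    have c2: "continuous_on {0..t} (\<lambda>x. D * (t - x) powr \<kappa>)"
      by (intro continuous_on_mult continuous_on_const hp)
    have "continuous_on {0..t} f" unfolding f_def by (rule continuous_on_diff[OF c1 c2])
    then have c: "continuous_on (closure {0<..t}) f" using tp by simp
    have "f 0 \<le> 0"
    proof (rule continuous_le_on_closure[OF c])
      show "0 \<in> closure {0<..t}" using tp by simp
      fix x assume "x \<in> {0<..t}"
      then show "f x \<le> 0" using H2 unfolding f_def by auto
    qed
    then show ?thesis using s0 by (simp add: f_def)
  qed
qed

lemma cov_sym: "mbm_cov H s t = mbm_cov H t s"
proof -
  have "ci s t (H s) (H t) = ci t s (H t) (H s)" by (rule ext) (rule ci_sym)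
  then show ?thesis unfolding cov_ci by simp
qed

lemma char_incr:
  assumes Y: "harmonizable_mbm M H Y" and ts: "0 \<le> t" "0 \<le> s"
  shows "(\<integral>\<omega>. cis (\<theta> * (Y t \<omega> - Y s \<omega>)) \<partial>M) =
    complex_of_real (exp (- (\<theta>\<^sup>2 * (mbm_cov H t t - 2 * mbm_cov H t s + mbm_cov H s s)) / 2))"
proof -
  define tt where "tt k = (if k = (0::nat) then t else s)" for k
  define a where "a k = (if k = (0::nat) then \<theta> else - \<theta>)" for k
  have "\<forall>k<2. tt k \<ge> 0" using ts by (simp add: tt_def)
  then have eq: "integral\<^sup>L M (\<lambda>\<omega>. cis (\<Sum>k<2. a k * Y (tt k) \<omega>)) =
        complex_of_real (exp (- (\<Sum>j<2. \<Sum>k<2. a j * a k * mbm_cov H (tt j) (tt k)) / 2))"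
    using Y unfolding harmonizable_mbm_def by blast
  have s1: "(\<Sum>k<2. a k * Y (tt k) \<omega>) = \<theta> * (Y t \<omega> - Y s \<omega>)" for \<omega>
    by (simp add: numeral_2_eq_2 a_def tt_def algebra_simps)
  have s2: "(\<Sum>j<2. \<Sum>k<2. a j * a k * mbm_cov H (tt j) (tt k)) = \<theta>\<^sup>2 * (mbm_cov H t t - 2 * mbm_cov H t s + mbm_cov H s s)"
    by (simp add: numeral_2_eq_2 a_def tt_def cov_sym[of H s t] algebra_simps power2_eq_square)
  show ?thesis using eq unfolding s1 s2 .
qed

lemma incvar_bound:
  fixes H :: "real \<Rightarrow> real"
  assumes H1: "\<forall>t\<ge>0. h1 \<le> H t \<and> H t \<le> h2"
    and h: "0 < h1" "h1 < h2" "h2 < 1" and Dp: "0 < D" and k: "0 < \<kappa>" "\<kappa> \<le> 1"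
    and Hl: "\<And>t s. 0 \<le> s \<Longrightarrow> s \<le> t \<Longrightarrow> \<bar>H t - H s\<bar> \<le> D * (t - s) powr \<kappa>"
    and ep: "0 < \<epsilon>"
  shows "\<exists>K>0. \<forall>t s. 0 \<le> s \<and> s < t \<and> t \<le> s + 1 \<longrightarrow>
     mbm_cov H t t - 2 * mbm_cov H t s + mbm_cov H s s \<le> K * max t 1 powr (2 * h2 + \<epsilon>) * (t - s) powr (2 * min h1 \<kappa>)"
proof -
  define e where "e = min (min h1 (1 - h2)) \<epsilon> / 2"
  have e0: "0 < e" and e1: "e \<le> h1 / 2" and e2: "e \<le> (1 - h2) / 2" and e3: "2 * e \<le> \<epsilon>"
    using h ep by (auto simp: e_def)
  define c1 where "c1 = 2 * h1 - 2 * e"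
  define c2 where "c2 = 2 * h2 + 2 * e"
  have c1p: "0 < c1" and c2l: "c2 < 2" and c12: "c1 \<le> c2" using e0 e1 e2 h by (auto simp: c1_def c2_def)
  define J where "J = Jc c1 c2"
  have J0: "0 \<le> J" using c1p c2l by (simp add: J_def Jc_def)
  define h3 where "h3 = min h1 \<kappa>"
  define K where "K = (2 * J + 32 * D\<^sup>2 * J / e\<^sup>2) / (2 * pi) + 1"
  have "0 \<le> (2 * J + 32 * D\<^sup>2 * J / e\<^sup>2) / (2 * pi)" using J0 e0
    by (intro divide_nonneg_pos add_nonneg_nonneg mult_nonneg_nonneg) auto
  then have K0: "0 < K" unfolding K_def by linarith
  show ?thesis
  proof (intro exI[of _ K] conjI allI impI K0)
    fix t s :: real assume "0 \<le> s \<and> s < t \<and> t \<le> s + 1"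
    then have s0: "0 \<le> s" and st: "s < t" and t1: "t \<le> s + 1" by auto
    define a where "a = H t"
    define b where "b = H s"
    have ab: "h1 \<le> a" "a \<le> h2" "h1 \<le> b" "b \<le> h2" using H1 s0 st by (auto simp: a_def b_def)
    define \<delta> where "\<delta> = t - s"
    have d0: "0 < \<delta>" and d1: "\<delta> \<le> 1" using st t1 by (auto simp: \<delta>_def)
    define M where "M = max t 1 powr (2 * h2 + \<epsilon>)"
    have M1: "1 \<le> M" unfolding M_def using h ep by (intro ge_one_powr_ge_zero) auto
    define Q where "Q = \<delta> powr (2 * h3)"
    have Q0: "0 \<le> Q" by (simp add: Q_def)
    define F0 where "F0 u = mm (\<delta> * u) * \<bar>u\<bar> powr (-(2*a+1))" for u
    define F1 where "F1 u = mm (s * u) * \<bar>u\<bar> powr (-((2*a-2*e)+1))" for u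
    define F2 where "F2 u = mm (s * u) * \<bar>u\<bar> powr (-((2*a+2*e)+1))" for u
    define F3 where "F3 u = mm (s * u) * \<bar>u\<bar> powr (-((2*b-2*e)+1))" for u
    define F4 where "F4 u = mm (s * u) * \<bar>u\<bar> powr (-((2*b+2*e)+1))" for u
    define k where "k = 8 / e\<^sup>2 * (a - b)\<^sup>2"
    have k0: "0 \<le> k" by (simp add: k_def)
    have cr: "c1 \<le> 2*a" "2*a \<le> c2" "c1 \<le> 2*a-2*e" "2*a-2*e \<le> c2" "c1 \<le> 2*a+2*e" "2*a+2*e \<le> c2"
      "c1 \<le> 2*b-2*e" "2*b-2*e \<le> c2" "c1 \<le> 2*b+2*e" "2*b+2*e \<le> c2"
      using ab e0 by (auto simp: c1_def c2_def)
    have iF0: "integrable lborel F0" and bF0: "integral\<^sup>L lborel F0 \<le> J * \<delta> powr (2*a)"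
      unfolding F0_def J_def using J_int[OF c1p cr(1) cr(2) c2l, of \<delta>] d0 by auto
    have iF1: "integrable lborel F1" and bF1: "integral\<^sup>L lborel F1 \<le> J * s powr (2*a-2*e)"
      unfolding F1_def J_def using J_int[OF c1p cr(3) cr(4) c2l, of s] s0 by auto
    have iF2: "integrable lborel F2" and bF2: "integral\<^sup>L lborel F2 \<le> J * s powr (2*a+2*e)"
      unfolding F2_def J_def using J_int[OF c1p cr(5) cr(6) c2l, of s] s0 by auto
    have iF3: "integrable lborel F3" and bF3: "integral\<^sup>L lborel F3 \<le> J * s powr (2*b-2*e)"
      unfolding F3_def J_def using J_int[OF c1p cr(7) cr(8) c2l, of s] s0 by auto
    have iF4: "integrable lborel F4" and bF4: "integral\<^sup>L lborel F4 \<le> J * s powr (2*b+2*e)"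
      unfolding F4_def J_def using J_int[OF c1p cr(9) cr(10) c2l, of s] s0 by auto
    define R where "R u = 2 * F0 u + k * F1 u + k * F2 u + k * F3 u + k * F4 u" for u
    have iR: "integrable lborel R" unfolding R_def using iF0 iF1 iF2 iF3 iF4 by simp
    have intR: "integral\<^sup>L lborel R = 2 * integral\<^sup>L lborel F0 + k * integral\<^sup>L lborel F1 + k * integral\<^sup>L lborel F2 + k * integral\<^sup>L lborel F3 + k * integral\<^sup>L lborel F4"
      unfolding R_def using iF0 iF1 iF2 iF3 iF4 by simp
    have Hr: "0 < H t" "H t < 1" "0 < H s" "H s < 1" using ab h by (auto simp: a_def b_def)
    have iG: "integrable lborel (\<lambda>u. (cmod (gf t (H t) u - gf s (H s) u))\<^sup>2)"
      using incvar_integrable[OF _ s0 Hr] st s0 by simp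
    have GR: "(cmod (gf t a u - gf s b u))\<^sup>2 \<le> R u" for u
    proof -
      have "(cmod (gf t a u - gf s b u))\<^sup>2 \<le> 2 * mm ((t - s) * u) * \<bar>u\<bar> powr (-(2*a+1))
       + k * mm (s * u) * (\<bar>u\<bar> powr (-((2*a-2*e)+1)) + \<bar>u\<bar> powr (-((2*a+2*e)+1))
         + \<bar>u\<bar> powr (-((2*b-2*e)+1)) + \<bar>u\<bar> powr (-((2*b+2*e)+1)))"
        unfolding k_def by (rule pw_bound) (use s0 st e0 in auto)
      also have "\<dots> = R u" unfolding R_def F0_def F1_def F2_def F3_def F4_def \<delta>_def
        by (simp add: algebra_simps)
      finally show ?thesis .
    qed
    have "integral\<^sup>L lborel (\<lambda>u. (cmod (gf t (H t) u - gf s (H s) u))\<^sup>2) \<le> integral\<^sup>L lborel R"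
      using iG iR GR by (intro integral_mono) (auto simp: a_def b_def)
    have dQ1: "\<delta> powr (2*a) \<le> Q" unfolding Q_def h3_def using d0 d1 ab by (intro powr_mono') auto
    have dQ2: "\<delta> powr (2*\<kappa>) \<le> Q" unfolding Q_def h3_def using d0 d1 ab by (intro powr_mono') auto
    have kb: "k \<le> 8 / e\<^sup>2 * D\<^sup>2 * Q"
    proof -
      have "\<bar>a - b\<bar> \<le> D * \<delta> powr \<kappa>" unfolding a_def b_def \<delta>_def using Hl[of s t] s0 st by simp
      then have "(a - b)\<^sup>2 \<le> (D * \<delta> powr \<kappa>)\<^sup>2"
        by (metis abs_ge_zero power2_abs power_mono)
      also have "\<dots> = D\<^sup>2 * \<delta> powr (2*\<kappa>)" using d0 by (simp add: power_mult_distrib powr_sq)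
      also have "\<dots> \<le> D\<^sup>2 * Q" using dQ2 by (intro mult_left_mono) auto
      finally have ab2: "(a - b)\<^sup>2 \<le> D\<^sup>2 * Q" .
      have "k = 8 / e\<^sup>2 * (a - b)\<^sup>2" by (simp add: k_def)
      also have "\<dots> \<le> 8 / e\<^sup>2 * (D\<^sup>2 * Q)" using ab2 by (intro mult_left_mono) auto
      finally show ?thesis by (simp add: mult.assoc)
    qed
    have sM: "s powr c \<le> M" if "c1 \<le> c" "c \<le> c2" for c
    proof -
      have "s powr c \<le> max t 1 powr c" using s0 st that c1p by (intro powr_mono2) auto
      also have "\<dots> \<le> max t 1 powr (2 * h2 + \<epsilon>)" using that e3 by (intro powr_mono) (auto simp: c2_def)
      finally show ?thesis by (simp add: M_def)
    qed
    have b1: "integral\<^sup>L lborel F0 \<le> J * Q * M"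
    proof -
      have "integral\<^sup>L lborel F0 \<le> J * Q" using bF0 dQ1 J0 by (meson mult_left_mono order_trans)
      also have "\<dots> \<le> J * Q * M" using mult_left_mono[OF M1, of "J * Q"] J0 Q0 by simp
      finally show ?thesis .
    qed
    have b2: "integral\<^sup>L lborel Fi \<le> J * M" if "integral\<^sup>L lborel Fi \<le> J * s powr c" "c1 \<le> c" "c \<le> c2" for Fi c
      using that sM[of c] J0 by (meson mult_left_mono order_trans)
    have "integral\<^sup>L lborel R \<le> 2 * (J * Q * M) + k * (J * M) + k * (J * M) + k * (J * M) + k * (J * M)"
      unfolding intR using b1 b2[OF bF1 cr(3,4)] b2[OF bF2 cr(5,6)] b2[OF bF3 cr(7,8)] b2[OF bF4 cr(9,10)] k0
      by (intro add_mono mult_left_mono) auto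
    also have "\<dots> = 2 * J * Q * M + 4 * (k * (J * M))" by (simp add: algebra_simps)
    also have "\<dots> \<le> 2 * J * Q * M + 4 * ((8 / e\<^sup>2 * D\<^sup>2 * Q) * (J * M))"
      using kb J0 M1 by (intro add_mono mult_left_mono mult_right_mono) auto
    also have "\<dots> = (2 * J + 32 * D\<^sup>2 * J / e\<^sup>2) * M * Q" by (simp add: field_simps)
    finally have iRb: "integral\<^sup>L lborel R \<le> (2 * J + 32 * D\<^sup>2 * J / e\<^sup>2) * M * Q" .
    have "mbm_cov H t t - 2 * mbm_cov H t s + mbm_cov H s s
        = (1 / (2 * pi)) * integral\<^sup>L lborel (\<lambda>u. (cmod (gf t (H t) u - gf s (H s) u))\<^sup>2)"
      using st s0 Hr by (intro incvar_eq) auto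
    also have "\<dots> \<le> (1 / (2 * pi)) * ((2 * J + 32 * D\<^sup>2 * J / e\<^sup>2) * M * Q)"
      using \<open>integral\<^sup>L lborel (\<lambda>u. (cmod (gf t (H t) u - gf s (H s) u))\<^sup>2) \<le> integral\<^sup>L lborel R\<close> iRb
      by (intro mult_left_mono) auto
    also have "\<dots> \<le> K * M * Q"
    proof -
      have "(1 / (2 * pi)) * ((2 * J + 32 * D\<^sup>2 * J / e\<^sup>2) * M * Q) = ((2 * J + 32 * D\<^sup>2 * J / e\<^sup>2) / (2 * pi)) * (M * Q)"
        by simp
      also have "\<dots> \<le> K * (M * Q)" unfolding K_def using M1 Q0 by (intro mult_right_mono) auto
      finally show ?thesis by (simp add: mult.assoc)
    qed
    finally show "mbm_cov H t t - 2 * mbm_cov H t s + mbm_cov H s s \<le> K * max t 1 powr (2 * h2 + \<epsilon>) * (t - s) powr (2 * min h1 \<kappa>)"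
      by (simp add: M_def Q_def h3_def \<delta>_def)
  qed
qed

definition fl :: "nat \<Rightarrow> real \<Rightarrow> nat" where "fl n t = nat \<lfloor>t * 2 ^ n\<rfloor>"
definition sd :: "nat \<Rightarrow> real \<Rightarrow> real" where "sd n t = real (fl n t) / 2 ^ n"

lemma fl_step:
  assumes "0 \<le> t"
  shows "fl (Suc n) t = 2 * fl n t \<or> fl (Suc n) t = 2 * fl n t + 1"
proof -
  define x where "x = t * 2 ^ n"
  define j where "j = \<lfloor>x\<rfloor>"
  have x0: "0 \<le> x" using assms by (simp add: x_def)
  have j0: "0 \<le> j" using x0 by (simp add: j_def)
  have jx: "of_int j \<le> x" "x < of_int j + 1" by (simp_all add: j_def)
  have tx: "t * 2 ^ Suc n = 2 * x" by (simp add: x_def)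
  have a: "2 * j \<le> \<lfloor>2 * x\<rfloor>" using jx by (subst le_floor_iff) simp
  have b: "\<lfloor>2 * x\<rfloor> < 2 * j + 2" using jx by (subst floor_less_iff) simp
  have "\<lfloor>2 * x\<rfloor> = 2 * j \<or> \<lfloor>2 * x\<rfloor> = 2 * j + 1" using a b by linarith
  then show ?thesis unfolding fl_def tx j_def[symmetric] x_def[symmetric] using j0 by (auto simp: nat_mult_distrib nat_add_distrib)
qed

lemma sd_props:
  assumes "0 \<le> t"
  shows "0 \<le> sd n t" "sd n t \<le> t" "t - sd n t < 1 / 2 ^ n"
proof -
  define x where "x = t * 2 ^ n"
  have x0: "0 \<le> x" using assms by (simp add: x_def)
  have e: "real (fl n t) = of_int \<lfloor>x\<rfloor>" using x0 by (simp add: fl_def x_def)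
  have f1: "of_int \<lfloor>x\<rfloor> \<le> x" "x < of_int \<lfloor>x\<rfloor> + 1" by simp_all
  show "0 \<le> sd n t" by (simp add: sd_def)
  show "sd n t \<le> t" using f1(1) unfolding sd_def e x_def by (simp add: pos_divide_le_eq)
  have "t < (of_int \<lfloor>x\<rfloor> + 1) / 2 ^ n" using f1(2) unfolding x_def by (simp add: pos_less_divide_eq)
  then show "t - sd n t < 1 / 2 ^ n" unfolding sd_def e by (simp add: add_divide_distrib)
qed

lemma sd_tendsto:
  assumes "0 \<le> t"
  shows "(\<lambda>N. sd N t) \<longlonglongrightarrow> t"
proof -
  have "(\<lambda>N. t - sd N t) \<longlonglongrightarrow> 0"
  proof (rule tendsto_sandwich[of "\<lambda>_. 0" _ _ "\<lambda>N. (1/2) ^ N"])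
    show "\<forall>\<^sub>F N in sequentially. 0 \<le> t - sd N t" using sd_props[OF assms] by simp
    show "\<forall>\<^sub>F N in sequentially. t - sd N t \<le> (1/2) ^ N"
      using sd_props(3)[OF assms] by (simp add: power_one_over less_imp_le)
    show "(\<lambda>N. (1/2::real) ^ N) \<longlonglongrightarrow> 0" by (rule LIMSEQ_power_zero) simp
  qed simp
  then have "(\<lambda>N. t - (t - sd N t)) \<longlonglongrightarrow> t - 0" by (intro tendsto_intros)
  then show ?thesis by simp
qed

definition qh :: "real \<Rightarrow> real" where "qh h = (1/2) powr h"
definition cph :: "real \<Rightarrow> real" where "cph h = 2 * qh h / (1 - qh h)"
definition Aph :: "real \<Rightarrow> real" where "Aph h = 1 / (1 - qh h)"
definition Phi :: "real \<Rightarrow> nat \<Rightarrow> real" where "Phi h n = cph h * qh h ^ n * (real n + Aph h)"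
definition Cch :: "real \<Rightarrow> real" where "Cch h = (1 + 2 * cph h * Aph h) * 2 * (1 / ln 2 + 1)"

lemma qh_props: "0 < h \<Longrightarrow> 0 < qh h \<and> qh h < 1"
proof -
  assume h: "0 < h"
  have "1 < (2::real) powr h" using h by (intro gr_one_powr) auto
  moreover have "qh h = 1 / 2 powr h" by (simp add: qh_def powr_divide)
  ultimately show ?thesis by simp
qed

lemma Phi_step:
  assumes h: "0 < h"
  shows "qh h ^ Suc N * real (Suc (Suc N)) + Phi h (Suc N) \<le> Phi h N"
proof -
  define q where "q = qh h"
  define c where "c = cph h"
  define A where "A = Aph h"
  have q: "0 < q" "q < 1" using qh_props[OF h] by (auto simp: q_def)
  have i1: "c * (1 - q) = 2 * q" using q by (simp add: c_def cph_def q_def[symmetric])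
  have i2: "A * (1 - q) = 1" using q by (simp add: A_def Aph_def q_def[symmetric])
  have "c * (real N + A) - c * q * (real N + 1 + A) = c * (1 - q) * real N + c * (A * (1 - q)) - c * q"
    by (simp add: algebra_simps)
  also have "\<dots> = 2 * q * real N + c * 1 - c * q" unfolding i1 i2 by simp
  also have "\<dots> = 2 * q * real N + c * (1 - q)" by (simp add: algebra_simps)
  also have "\<dots> = 2 * q * real N + 2 * q" using i1 by simp
  finally have key: "c * (real N + A) - c * q * (real N + 1 + A) = 2 * q * real N + 2 * q" .
  have qn: "0 \<le> q * real N" using q by simp
  have "q * real (Suc (Suc N)) = 2 * q + q * real N" by (simp add: algebra_simps)
  then have "q * real (Suc (Suc N)) + c * q * (real N + 1 + A) \<le> c * (real N + A)"
    using key qn by linarith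
  then have "q ^ N * (q * real (Suc (Suc N)) + c * q * (real N + 1 + A)) \<le> q ^ N * (c * (real N + A))"
    using q by (intro mult_left_mono) auto
  then show ?thesis unfolding Phi_def q_def[symmetric] c_def[symmetric] A_def[symmetric]
    by (simp add: algebra_simps)
qed

lemma Phi_nonneg: "0 < h \<Longrightarrow> 0 \<le> Phi h n"
  using qh_props[of h] by (simp add: Phi_def cph_def Aph_def)

lemma Phi_le: "0 < h \<Longrightarrow> Phi h n \<le> cph h * Aph h * (qh h ^ n * real (Suc n))"
proof -
  assume h: "0 < h"
  have q: "0 < qh h" "qh h < 1" using qh_props[OF h] by auto
  have A1: "1 \<le> Aph h" using q by (simp add: Aph_def)
  have c0: "0 \<le> cph h" using q by (simp add: cph_def)
  have "real n + Aph h \<le> Aph h * real (Suc n)" using mult_left_mono[OF A1, of "real n"] by (simp add: algebra_simps)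
  then have "cph h * qh h ^ n * (real n + Aph h) \<le> cph h * qh h ^ n * (Aph h * real (Suc n))"
    using c0 q by (intro mult_left_mono) auto
  then show ?thesis by (simp add: Phi_def algebra_simps)
qed

lemma chain_main:
  fixes f :: "real \<Rightarrow> real" and B \<alpha> h p t1 t2 :: real
  assumes fc: "continuous_on {0..} f" and B: "0 \<le> B" and \<alpha>: "0 \<le> \<alpha>" and h: "0 < h" "h \<le> 1" and p: "1 \<le> p"
    and inc: "\<And>n j. \<bar>f (real (Suc j) / 2 ^ n) - f (real j / 2 ^ n)\<bar>
               \<le> B * (max (real (Suc j) / 2 ^ n) 1 powr \<alpha> * (qh h ^ n * real (Suc n)))"
    and t: "0 \<le> t2" "t2 < t1" "t1 \<le> t2 + 1"
  shows "\<bar>f t1 - f t2\<bar> \<le> Cch h * B * max t1 1 powr \<alpha> * (t1 - t2) powr h * max (\<bar>ln (t1 - t2)\<bar> powr p) 1"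
proof -
  define W where "W = max t1 1 powr \<alpha>"
  define \<rho> where "\<rho> n = qh h ^ n * real (Suc n)" for n
  have q: "0 < qh h" "qh h < 1" using qh_props[OF h(1)] by auto
  have W0: "0 \<le> W" by (simp add: W_def)
  have BW: "0 \<le> B * W" using B W0 by simp
  have rho0: "0 \<le> \<rho> n" for n using q by (simp add: \<rho>_def)
  have Wb: "max x 1 powr \<alpha> \<le> W" if "x \<le> t1" for x
    unfolding W_def using that \<alpha> by (intro powr_mono2) auto
  have step: "\<bar>f (sd (Suc n) t) - f (sd n t)\<bar> \<le> B * W * \<rho> (Suc n)" if t0: "0 \<le> t" and tt: "t \<le> t1" for n t
  proof -
    define j where "j = fl n t"
    have e1: "sd n t = real (2 * j) / 2 ^ Suc n" by (simp add: sd_def j_def)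
    consider "fl (Suc n) t = 2 * j" | "fl (Suc n) t = 2 * j + 1" using fl_step[OF t0, of n] j_def by auto
    then show ?thesis
    proof cases
      case 1
      then have "sd (Suc n) t = real (2 * j) / 2 ^ Suc n" unfolding sd_def by simp
      then have "sd (Suc n) t = sd n t" using e1 by simp
      then show ?thesis using BW rho0[of "Suc n"] by simp
    next
      case 2
      then have e2: "sd (Suc n) t = real (Suc (2 * j)) / 2 ^ Suc n" by (simp add: sd_def)
      have "sd (Suc n) t \<le> t1" using sd_props(2)[OF t0, of "Suc n"] tt by simp
      then have "max (real (Suc (2 * j)) / 2 ^ Suc n) 1 powr \<alpha> \<le> W" using Wb e2 by simp
      then have "B * (max (real (Suc (2 * j)) / 2 ^ Suc n) 1 powr \<alpha> * \<rho> (Suc n)) \<le> B * (W * \<rho> (Suc n))"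
        using B rho0[of "Suc n"] by (intro mult_left_mono mult_right_mono) auto
      then show ?thesis using inc[where n="Suc n" and j="2 * j"] unfolding e1 e2 \<rho>_def by (simp add: mult.assoc)
    qed
  qed
  have chain: "\<bar>f (sd N t) - f (sd m t)\<bar> \<le> B * W * (Phi h m - Phi h N)"
    if t0: "0 \<le> t" and tt: "t \<le> t1" and mN: "m \<le> N" for m N t
    using mN
  proof (induction N rule: dec_induct)
    case base then show ?case by simp
  next
    case (step N)
    have "\<bar>f (sd (Suc N) t) - f (sd m t)\<bar> \<le> \<bar>f (sd (Suc N) t) - f (sd N t)\<bar> + \<bar>f (sd N t) - f (sd m t)\<bar>"
      by linarith
    also have "\<dots> \<le> B * W * \<rho> (Suc N) + B * W * (Phi h m - Phi h N)"
      using step.IH \<open>\<And>n t. 0 \<le> t \<Longrightarrow> t \<le> t1 \<Longrightarrow> \<bar>f (sd (Suc n) t) - f (sd n t)\<bar> \<le> B * W * \<rho> (Suc n)\<close>[OF t0 tt, of N]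
      by linarith
    also have "\<dots> = B * W * (\<rho> (Suc N) + Phi h (Suc N) - Phi h N) + B * W * (Phi h m - Phi h (Suc N))"
      by (simp add: algebra_simps)
    also have "\<dots> \<le> 0 + B * W * (Phi h m - Phi h (Suc N))"
    proof -
      have "\<rho> (Suc N) + Phi h (Suc N) - Phi h N \<le> 0" using Phi_step[OF h(1), of N] by (simp add: \<rho>_def)
      then have "B * W * (\<rho> (Suc N) + Phi h (Suc N) - Phi h N) \<le> 0" using BW by (simp add: mult_nonneg_nonpos)
      then show ?thesis by simp
    qed
    finally show ?case by simp
  qed
  have lim: "\<bar>f t - f (sd m t)\<bar> \<le> B * W * Phi h m" if t0: "0 \<le> t" and tt: "t \<le> t1" for m t
  proof -
    have "(\<lambda>N. f (sd N t)) \<longlonglongrightarrow> f t"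
      using fc sd_tendsto[OF t0] by (rule continuous_on_tendsto_compose) (use t0 sd_props(1)[OF t0] in auto)
    then have "(\<lambda>N. \<bar>f (sd N t) - f (sd m t)\<bar>) \<longlonglongrightarrow> \<bar>f t - f (sd m t)\<bar>" by (intro tendsto_intros)
    moreover have "\<exists>N0. \<forall>N\<ge>N0. \<bar>f (sd N t) - f (sd m t)\<bar> \<le> B * W * Phi h m"
    proof (intro exI allI impI)
      fix N assume "m \<le> N"
      then have "\<bar>f (sd N t) - f (sd m t)\<bar> \<le> B * W * (Phi h m - Phi h N)" by (rule chain[OF t0 tt])
      also have "\<dots> \<le> B * W * Phi h m" using BW Phi_nonneg[OF h(1), of N] by (simp add: mult_left_mono)
      finally show "\<bar>f (sd N t) - f (sd m t)\<bar> \<le> B * W * Phi h m" .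
    qed
    ultimately show ?thesis by (rule LIMSEQ_le_const2)
  qed
  define \<delta> where "\<delta> = t1 - t2"
  have d0: "0 < \<delta>" and d1: "\<delta> \<le> 1" using t by (auto simp: \<delta>_def)
  define L where "L = log 2 (1 / \<delta>)"
  have L0: "0 \<le> L" using d0 d1 by (simp add: L_def)
  define m where "m = nat \<lfloor>L\<rfloor>"
  have mL: "real m \<le> L" "L < real m + 1" using L0 by (simp_all add: m_def)
  have pL: "2 powr L = 1 / \<delta>" using d0 by (simp add: L_def)
  have "(2::real) ^ m = 2 powr real m" by (simp add: powr_realpow)
  also have "\<dots> \<le> 2 powr L" using mL by simp
  finally have m1: "2 ^ m \<le> 1 / \<delta>" using pL by simp
  have "1 / \<delta> < 2 powr (real m + 1)" using mL pL by (metis powr_less_cancel_iff one_less_numeral_iff semiring_norm(76))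
  also have "2 powr (real m + 1) = 2 ^ Suc m" by (simp add: powr_add powr_realpow)
  finally have m2: "1 / \<delta> < 2 ^ Suc m" .
  have dm: "\<delta> * 2 ^ m \<le> 1" using m1 d0 by (simp add: field_simps)
  have bridge: "\<bar>f (sd m t1) - f (sd m t2)\<bar> \<le> B * W * \<rho> m"
  proof -
    define x where "x = t2 * 2 ^ m"
    have x0: "0 \<le> x" using t by (simp add: x_def)
    have y: "t1 * 2 ^ m = x + \<delta> * 2 ^ m" by (simp add: x_def \<delta>_def algebra_simps)
    have a: "\<lfloor>x\<rfloor> \<le> \<lfloor>t1 * 2 ^ m\<rfloor>" unfolding y using d0 by (intro floor_mono) simp
    have b: "\<lfloor>t1 * 2 ^ m\<rfloor> \<le> \<lfloor>x\<rfloor> + 1"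
    proof -
      have "t1 * 2 ^ m \<le> x + 1" unfolding y using dm by simp
      then have "\<lfloor>t1 * 2 ^ m\<rfloor> \<le> \<lfloor>x + 1\<rfloor>" by (rule floor_mono)
      then show ?thesis by simp
    qed
    define j where "j = fl m t2"
    have jx: "int j = \<lfloor>x\<rfloor>" using x0 by (simp add: j_def fl_def x_def)
    have "fl m t1 = j \<or> fl m t1 = Suc j" using a b jx x0 unfolding fl_def by linarith
    then show ?thesis
    proof
      assume "fl m t1 = j"
      then have "sd m t1 = sd m t2" by (simp add: sd_def j_def)
      then show ?thesis using BW rho0[of m] by simp
    next
      assume e: "fl m t1 = Suc j"
      have e1: "sd m t1 = real (Suc j) / 2 ^ m" by (simp add: sd_def e)
      have e2: "sd m t2 = real j / 2 ^ m" by (simp add: sd_def j_def)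
      have "sd m t1 \<le> t1" using sd_props(2) t by simp
      then have "max (real (Suc j) / 2 ^ m) 1 powr \<alpha> \<le> W" using Wb e1 by simp
      then have "B * (max (real (Suc j) / 2 ^ m) 1 powr \<alpha> * \<rho> m) \<le> B * (W * \<rho> m)"
        using B rho0[of m] by (intro mult_left_mono mult_right_mono) auto
      then show ?thesis using inc[where n=m and j=j] unfolding e1 e2 \<rho>_def by (simp add: mult.assoc)
    qed
  qed
  have l1: "\<bar>f t1 - f (sd m t1)\<bar> \<le> B * W * Phi h m" using lim t by simp
  have l2: "\<bar>f t2 - f (sd m t2)\<bar> \<le> B * W * Phi h m" using lim t by simp
  have "\<bar>f t1 - f t2\<bar> \<le> \<bar>f t1 - f (sd m t1)\<bar> + \<bar>f (sd m t1) - f (sd m t2)\<bar> + \<bar>f t2 - f (sd m t2)\<bar>"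
    by linarith
  also have "\<dots> \<le> B * W * (2 * Phi h m + \<rho> m)" using l1 l2 bridge by (simp add: algebra_simps)
  also have "2 * Phi h m + \<rho> m \<le> (1 + 2 * cph h * Aph h) * \<rho> m"
    using Phi_le[OF h(1), of m] by (simp add: \<rho>_def algebra_simps)
  also have "\<rho> m \<le> 2 * (1 / ln 2 + 1) * (\<delta> powr h * max (\<bar>ln \<delta>\<bar> powr p) 1)"
  proof -
    have "qh h ^ m = (1/2) powr (real m * h)" by (simp add: qh_def powr_power)
    also have "\<dots> = ((1/2) ^ m) powr h" by (simp add: powr_powr[symmetric] powr_realpow)
    also have "\<dots> \<le> (2 * \<delta>) powr h"
    proof (rule powr_mono2)
      have "(1/2::real) ^ m = 2 * (1 / 2 ^ Suc m)" by (simp add: power_one_over)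
      also have "1 / 2 ^ Suc m < \<delta>" using m2 d0 by (simp add: field_simps)
      finally show "(1/2::real) ^ m \<le> 2 * \<delta>" by simp
    qed (use h in auto)
    also have "\<dots> = 2 powr h * \<delta> powr h" using d0 by (simp add: powr_mult)
    also have "\<dots> \<le> 2 * \<delta> powr h"
    proof (rule mult_right_mono)
      show "(2::real) powr h \<le> 2" using h powr_mono[of h 1 2] by simp
    qed simp
    finally have qm: "qh h ^ m \<le> 2 * \<delta> powr h" .
    define y where "y = \<bar>ln \<delta>\<bar>"
    have y0: "0 \<le> y" by (simp add: y_def)
    have Ly: "L = y / ln 2" using d0 d1 by (simp add: L_def y_def log_def ln_div)
    have "real (Suc m) \<le> y / ln 2 + 1" using mL Ly by simp
    also have "\<dots> \<le> (1 / ln 2 + 1) * max (y powr p) 1"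
    proof (cases "y \<le> 1")
      case True
      then have "y / ln 2 \<le> 1 / ln 2" by (simp add: divide_right_mono)
      then have "y / ln 2 + 1 \<le> (1 / ln 2 + 1) * 1" by simp
      also have "\<dots> \<le> (1 / ln 2 + 1) * max (y powr p) 1" by (intro mult_left_mono) auto
      finally show ?thesis .
    next
      case False
      have "y = y powr 1" using False by simp
      also have "\<dots> \<le> y powr p" using False p by (intro powr_mono) auto
      finally have yp: "y \<le> y powr p" .
      have ones: "1 \<le> y powr p" using False p by (intro ge_one_powr_ge_zero) auto
      have "y / ln 2 \<le> y powr p / ln 2" using yp by (intro divide_right_mono) auto
      then have "y / ln 2 + 1 \<le> y powr p / ln 2 + y powr p" using ones by linarith
      also have "\<dots> = (1 / ln 2 + 1) * y powr p" by (simp add: algebra_simps)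
      also have "\<dots> \<le> (1 / ln 2 + 1) * max (y powr p) 1" by (intro mult_left_mono) auto
      finally show ?thesis .
    qed
    finally have mp: "real (Suc m) \<le> (1 / ln 2 + 1) * max (\<bar>ln \<delta>\<bar> powr p) 1" by (simp add: y_def)
    have "\<rho> m = qh h ^ m * real (Suc m)" by (simp add: \<rho>_def)
    also have "\<dots> \<le> (2 * \<delta> powr h) * ((1 / ln 2 + 1) * max (\<bar>ln \<delta>\<bar> powr p) 1)"
      using qm mp q by (intro mult_mono) auto
    finally show ?thesis by (simp add: algebra_simps)
  qed
  finally have "\<bar>f t1 - f t2\<bar> \<le> B * W * ((1 + 2 * cph h * Aph h) * (2 * (1 / ln 2 + 1) * (\<delta> powr h * max (\<bar>ln \<delta>\<bar> powr p) 1)))"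
    using BW q by (simp add: mult_left_mono cph_def Aph_def)
  also have "B * W * ((1 + 2 * cph h * Aph h) * (2 * (1 / ln 2 + 1) * (\<delta> powr h * max (\<bar>ln \<delta>\<bar> powr p) 1)))
      = Cch h * B * max t1 1 powr \<alpha> * (t1 - t2) powr h * max (\<bar>ln (t1 - t2)\<bar> powr p) 1"
    unfolding Cch_def W_def \<delta>_def by (simp only: mult.assoc mult.commute mult.left_commute)
  finally show ?thesis .
qed

lemma exp_ge_pow_over:
  fixes z :: real assumes "0 \<le> z" "0 < N"
  shows "(z / real N) ^ N \<le> exp z"
proof -
  have "(z / real N) ^ N \<le> (1 + z / real N) ^ N" using assms by (intro power_mono) auto
  also have "\<dots> \<le> exp z" using assms by (intro exp_ge_one_plus_x_over_n_power_n) auto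
  finally show ?thesis .
qed

lemma exp_3_gt_4: "4 * exp (-3) < (1::real)"
proof -
  have "(1 + 3 / real (3::nat)) ^ 3 \<le> exp (3::real)" by (intro exp_ge_one_plus_x_over_n_power_n) auto
  then have "8 \<le> exp (3::real)" by simp
  then show ?thesis by (simp add: exp_minus field_simps)
qed

lemma pow4: "((2::real) ^ n)\<^sup>2 = 4 ^ n"
proof -
  have "((2::real) ^ n)\<^sup>2 = 2 ^ n * 2 ^ n" by (simp add: power2_eq_square)
  also have "\<dots> = (2 * 2) ^ n" by (rule power_mult_distrib[symmetric])
  finally show ?thesis by simp
qed

lemma S_finite:
  fixes \<epsilon> :: real assumes ep: "0 < \<epsilon>"
  shows "(\<Sum>n. \<Sum>j. ennreal (exp (-(max (real (Suc j) / 2 ^ n) 1 powr \<epsilon> * (real (Suc n))\<^sup>2)))) < \<infinity>"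
proof -
  define N where "N = nat \<lceil>2 / \<epsilon>\<rceil> + 1"
  have N0: "0 < N" by (simp add: N_def)
  have eN: "2 \<le> \<epsilon> * real N"
  proof -
    have "2 / \<epsilon> \<le> real (nat \<lceil>2 / \<epsilon>\<rceil>)" by linarith
    then have "2 / \<epsilon> \<le> real N" by (simp add: N_def)
    then show ?thesis using ep by (simp add: field_simps)
  qed
  define c where "c = exp 1 * real N ^ N"
  define A where "A n = (4 * exp (-3::real)) ^ n" for n :: nat
  define B where "B j = inverse (real (Suc j) ^ 2)" for j :: nat
  have c0: "0 \<le> c" by (simp add: c_def)
  have A0: "0 \<le> A n" for n by (simp add: A_def)
  have B0: "0 \<le> B j" for j by (simp add: B_def)
  have sA: "summable A" unfolding A_def using exp_3_gt_4 by (intro summable_geometric) simp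
  have sB: "summable B"
  proof -
    have "summable (\<lambda>j. inverse (real j ^ 2))" by (rule inverse_power_summable) simp
    then have "summable (\<lambda>j. inverse (real (Suc j) ^ 2))" by (subst summable_Suc_iff)
    then show ?thesis unfolding B_def .
  qed
  have pw: "exp (-(max (real (Suc j) / 2 ^ n) 1 powr \<epsilon> * (real (Suc n))\<^sup>2)) \<le> c * A n * B j" for n j
  proof -
    define T where "T = max (real (Suc j) / 2 ^ n) 1"
    define z where "z = T powr \<epsilon>"
    define y where "y = (real (Suc n))\<^sup>2"
    have T1: "1 \<le> T" by (simp add: T_def)
    have z1: "1 \<le> z" unfolding z_def using T1 ep by (intro ge_one_powr_ge_zero) auto
    have y1: "1 \<le> y" by (simp add: y_def)
    have "0 \<le> (z - 1) * (y - 1)" using z1 y1 by simp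
    then have zy: "z + y - 1 \<le> z * y" by (simp add: algebra_simps)
    have "exp (-(z * y)) \<le> exp (1 - y - z)" using zy by simp
    also have "\<dots> = exp 1 * exp (-y) * exp (-z)" by (simp add: exp_add[symmetric] exp_diff)
    finally have e1: "exp (-(z * y)) \<le> exp 1 * exp (-y) * exp (-z)" .
    have ey: "exp (-y) \<le> exp (-3) ^ n"
    proof -
      have "0 \<le> (real n - 1/2)\<^sup>2" by simp
      then have "3 * real n \<le> y" unfolding y_def by (simp add: power2_eq_square algebra_simps)
      then have "exp (-y) \<le> exp (-(3 * real n))" by simp
      also have "\<dots> = exp (-3) ^ n" by (simp add: exp_of_nat_mult[symmetric])
      finally show ?thesis .
    qed
    have ez: "exp (-z) \<le> real N ^ N * inverse (T\<^sup>2)"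
    proof -
      have "(z / real N) ^ N \<le> exp z" using z1 N0 by (intro exp_ge_pow_over) auto
      moreover have "T\<^sup>2 \<le> z ^ N"
      proof -
        have "z ^ N = T powr (\<epsilon> * real N)" unfolding z_def using T1 by (simp add: powr_power mult.commute)
        moreover have "T powr 2 \<le> T powr (\<epsilon> * real N)" using T1 eN by (intro powr_mono) auto
        ultimately show ?thesis using T1 by (simp add: powr_numeral)
      qed
      ultimately have "T\<^sup>2 / real N ^ N \<le> exp z"
        using divide_right_mono[of "T\<^sup>2" "z ^ N" "real N ^ N"] N0 by (simp add: power_divide)
      then have Tle: "T\<^sup>2 \<le> real N ^ N * exp z" using N0 by (simp add: pos_divide_le_eq mult.commute)
      have Np: "0 < real N ^ N" using N0 by simp
      have T2p: "0 < T\<^sup>2" using T1 by simp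
      have "exp (-z) = real N ^ N * inverse (real N ^ N * exp z)" using Np by (simp add: exp_minus)
      also have "\<dots> \<le> real N ^ N * inverse (T\<^sup>2)"
        using Np by (intro mult_left_mono le_imp_inverse_le Tle T2p) auto
      finally show ?thesis .
    qed
    have iT: "inverse (T\<^sup>2) \<le> 4 ^ n * B j"
    proof -
      define x where "x = real (Suc j)"
      have x0: "0 < x" by (simp add: x_def)
      have "x / 2 ^ n \<le> T" by (simp add: T_def x_def)
      then have "(x / 2 ^ n)\<^sup>2 \<le> T\<^sup>2" using x0 by (intro power_mono) auto
      then have "x\<^sup>2 / 4 ^ n \<le> T\<^sup>2" by (simp add: power_divide pow4)
      then have xle: "x\<^sup>2 \<le> T\<^sup>2 * 4 ^ n" by (simp add: pos_divide_le_eq)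
      have "inverse (T\<^sup>2) = 4 ^ n * inverse (T\<^sup>2 * 4 ^ n)" by simp
      also have "\<dots> \<le> 4 ^ n * inverse (x\<^sup>2)"
        using x0 by (intro mult_left_mono le_imp_inverse_le xle) auto
      finally show ?thesis by (simp add: B_def x_def)
    qed
    have "exp (-(z * y)) \<le> exp 1 * exp (-3) ^ n * (real N ^ N * (4 ^ n * B j))"
    proof -
      have "exp 1 * exp (-y) * exp (-z) \<le> exp 1 * exp (-3) ^ n * (real N ^ N * inverse (T\<^sup>2))"
        using ey ez by (intro mult_mono mult_left_mono) auto
      also have "\<dots> \<le> exp 1 * exp (-3) ^ n * (real N ^ N * (4 ^ n * B j))"
        using iT by (intro mult_left_mono) auto
      finally have e2: "exp 1 * exp (-y) * exp (-z) \<le> exp 1 * exp (-3) ^ n * (real N ^ N * (4 ^ n * B j))" .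
      show ?thesis using order_trans[OF e1 e2] .
    qed
    also have "\<dots> = c * A n * B j" by (simp add: c_def A_def power_mult_distrib)
    finally show ?thesis by (simp add: z_def y_def T_def mult.commute)
  qed
  have pw2: "ennreal (exp (-(max (real (Suc j) / 2 ^ n) 1 powr \<epsilon> * (real (Suc n))\<^sup>2))) \<le> ennreal (c * A n) * ennreal (B j)" for n j
    using pw[of j n] c0 A0[of n] B0[of j] by (simp add: ennreal_mult[symmetric])
  have "(\<Sum>n. \<Sum>j. ennreal (exp (-(max (real (Suc j) / 2 ^ n) 1 powr \<epsilon> * (real (Suc n))\<^sup>2)))) \<le>
        (\<Sum>n. \<Sum>j. ennreal (c * A n) * ennreal (B j))"
    by (intro suminf_le summableI pw2)
  also have "\<dots> = (\<Sum>n. ennreal (c * A n)) * (\<Sum>j. ennreal (B j))" by simp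
  also have "\<dots> = ennreal (\<Sum>n. c * A n) * ennreal (\<Sum>j. B j)"
    using sA sB c0 A0 B0 by (simp add: suminf_ennreal2 summable_mult)
  also have "\<dots> < \<infinity>" by (simp add: ennreal_mult_less_top)
  finally show ?thesis .
qed

lemma maxpowr:
  fixes t \<alpha> :: real assumes "0 < t" "0 \<le> \<alpha>"
  shows "max t 1 powr \<alpha> = max (t powr \<alpha>) 1"
proof (cases "t \<le> 1")
  case True
  have "t powr \<alpha> \<le> 1 powr \<alpha>" using assms True by (intro powr_mono2) auto
  then show ?thesis using True by (simp add: max_def)
next
  case False
  have "1 \<le> t powr \<alpha>" using assms False by (intro ge_one_powr_ge_zero) auto
  then show ?thesis using False by (simp add: max_def)
qed

lemma w_ratio:
  fixes T K r h2 \<epsilon> h3 :: real and n :: nat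
  assumes T: "1 \<le> T" and K: "0 < K"
  shows "(r * (T powr (h2 + \<epsilon>) * (qh h3 ^ n * real (Suc n))))\<^sup>2 / (4 * (K * T powr (2 * h2 + \<epsilon>) * (1 / 2 ^ n) powr (2 * h3)))
        = r\<^sup>2 / (4 * K) * (T powr \<epsilon> * (real (Suc n))\<^sup>2)"
proof -
  have Tp: "0 < T" using T by simp
  have q1: "(qh h3 ^ n)\<^sup>2 = (1 / 2 ^ n) powr (2 * h3)"
  proof -
    have "(qh h3 ^ n)\<^sup>2 = qh h3 ^ (2 * n)" by (simp add: power_mult[symmetric] mult.commute)
    also have "\<dots> = (1/2) powr (real (2 * n) * h3)" unfolding qh_def by (subst powr_power) simp_all
    also have "(1 / 2 ^ n :: real) = (1/2) powr real n" by (simp add: powr_realpow power_one_over)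
    then have "(1 / 2 ^ n :: real) powr (2 * h3) = (1/2) powr (real n * (2 * h3))" by (simp add: powr_powr)
    ultimately show ?thesis by (simp add: algebra_simps)
  qed
  have t1: "(T powr (h2 + \<epsilon>))\<^sup>2 = T powr (2 * h2 + \<epsilon>) * T powr \<epsilon>"
  proof -
    have "(T powr (h2 + \<epsilon>))\<^sup>2 = T powr (2 * (h2 + \<epsilon>))" using Tp by (simp add: powr_sq)
    also have "2 * (h2 + \<epsilon>) = (2 * h2 + \<epsilon>) + \<epsilon>" by simp
    also have "T powr ((2 * h2 + \<epsilon>) + \<epsilon>) = T powr (2 * h2 + \<epsilon>) * T powr \<epsilon>" by (rule powr_add)
    finally show ?thesis .
  qed
  define P where "P = T powr (2 * h2 + \<epsilon>)"
  define Q where "Q = (1 / 2 ^ n :: real) powr (2 * h3)"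
  have P0: "0 < P" using Tp by (simp add: P_def)
  have Q0: "0 < Q" by (simp add: Q_def)
  have "(r * (T powr (h2 + \<epsilon>) * (qh h3 ^ n * real (Suc n))))\<^sup>2 = r\<^sup>2 * (T powr (h2 + \<epsilon>))\<^sup>2 * (qh h3 ^ n)\<^sup>2 * (real (Suc n))\<^sup>2"
    by (simp add: power_mult_distrib)
  also have "\<dots> = r\<^sup>2 * (P * T powr \<epsilon>) * Q * (real (Suc n))\<^sup>2" unfolding t1 q1 P_def Q_def ..
  finally have e: "(r * (T powr (h2 + \<epsilon>) * (qh h3 ^ n * real (Suc n))))\<^sup>2 = r\<^sup>2 * (P * T powr \<epsilon>) * Q * (real (Suc n))\<^sup>2" .
  show ?thesis unfolding e P_def[symmetric] Q_def[symmetric] using P0 Q0 K by (simp add: field_simps)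
qed

theorem theorem9:
  fixes M :: "'a measure" and H :: "real \<Rightarrow> real" and Y :: "real \<Rightarrow> 'a \<Rightarrow> real"
    and h1 h2 D \<kappa> :: real
  assumes H_cont: "continuous_on {0..} H"
    and H_range: "\<forall>t\<ge>0. 0 < H t \<and> H t < 1"
    and h12: "0 < h1" "h1 < h2" "h2 < 1"
    and H1: "\<forall>t\<ge>0. h1 \<le> H t \<and> H t \<le> h2"
    and D_pos: "D > 0" and \<kappa>: "0 < \<kappa>" "\<kappa> \<le> 1"
    and H2: "\<forall>t s. 0 < s \<and> s \<le> t \<longrightarrow> \<bar>H t - H s\<bar> \<le> D * (t - s) powr \<kappa>"
    and Y_mbm: "harmonizable_mbm M H Y"
    and Y_cont: "\<forall>\<omega>\<in>space M. continuous_on {0..} (\<lambda>t. Y t \<omega>)"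
  shows "\<forall>\<epsilon>>0. \<forall>p>2. \<exists>\<eta>. \<eta> \<in> borel_measurable M \<and> (\<forall>\<omega>\<in>space M. \<eta> \<omega> \<ge> 0) \<and>
           (AE \<omega> in M. \<forall>t1 t2. 0 \<le> t2 \<and> t2 < t1 \<and> t1 \<le> t2 + 1 \<longrightarrow>
              \<bar>Y t1 \<omega> - Y t2 \<omega>\<bar> \<le>
                max (t1 powr (h2 + \<epsilon>)) 1 * (t1 - t2) powr (min h1 \<kappa>) *
                max (\<bar>ln (t1 - t2)\<bar> powr p) 1 * \<eta> \<omega>) \<and>
           (\<exists>C1>0. \<exists>C2>0. \<forall>u>0. measure M {\<omega>\<in>space M. \<eta> \<omega> > u} \<le> C1 * exp (- C2 * u\<^sup>2))"
proof (intro allI impI)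
  fix \<epsilon> p :: real
  assume ep: "0 < \<epsilon>" and p2: "2 < p"
  have P: "prob_space M" using Y_mbm by (simp add: harmonizable_mbm_def)
  interpret prob_space M by (rule P)
  have YM: "Y t \<in> borel_measurable M" if "0 \<le> t" for t
    using Y_mbm that by (simp add: harmonizable_mbm_def)
  have Hlip: "\<And>t s. 0 \<le> s \<Longrightarrow> s \<le> t \<Longrightarrow> \<bar>H t - H s\<bar> \<le> D * (t - s) powr \<kappa>"
    using H2_ext[OF H_cont H2 \<kappa>(1)] by blast
  obtain K where K0: "0 < K" and Kb: "\<And>t s. 0 \<le> s \<Longrightarrow> s < t \<Longrightarrow> t \<le> s + 1 \<Longrightarrow>
     mbm_cov H t t - 2 * mbm_cov H t s + mbm_cov H s s \<le> K * max t 1 powr (2 * h2 + \<epsilon>) * (t - s) powr (2 * min h1 \<kappa>)"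
    using incvar_bound[OF H1 h12 D_pos \<kappa> Hlip ep] by blast
  define h3 where "h3 = min h1 \<kappa>"
  have h3: "0 < h3" "h3 \<le> 1" using h12 \<kappa> by (auto simp: h3_def)
  define \<alpha> where "\<alpha> = h2 + \<epsilon>"
  have \<alpha>0: "0 \<le> \<alpha>" using h12 ep by (simp add: \<alpha>_def)
  define \<Delta> where "\<Delta> n j \<omega> = Y (real (Suc j) / 2 ^ n) \<omega> - Y (real j / 2 ^ n) \<omega>" for n j \<omega>
  define w where "w n j = max (real (Suc j) / 2 ^ n) 1 powr \<alpha> * (qh h3 ^ n * real (Suc n))" for n j
  have q: "0 < qh h3" using qh_props[OF h3(1)] by simp
  have w0: "0 < w n j" for n j using q by (simp add: w_def)
  have \<Delta>M[measurable]: "\<Delta> n j \<in> borel_measurable M" for n j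
  proof -
    have "Y (real (Suc j) / 2 ^ n) \<in> borel_measurable M" by (rule YM) simp
    moreover have "Y (real j / 2 ^ n) \<in> borel_measurable M" by (rule YM) simp
    ultimately show ?thesis unfolding \<Delta>_def by measurable
  qed
  define Z where "Z \<omega> = (SUP n. SUP j. ennreal (\<bar>\<Delta> n j \<omega>\<bar> / w n j))" for \<omega>
  have ZM[measurable]: "Z \<in> borel_measurable M" unfolding Z_def by measurable
  define X where "X n j = max (real (Suc j) / 2 ^ n) 1 powr \<epsilon> * (real (Suc n))\<^sup>2" for n j
  have X1: "1 \<le> X n j" for n j
  proof -
    have a1: "1 \<le> max (real (Suc j) / 2 ^ n) 1 powr \<epsilon>" using ep by (intro ge_one_powr_ge_zero) auto
    have b1: "1 \<le> (real (Suc n))\<^sup>2" by simp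
    have "1 * 1 \<le> max (real (Suc j) / 2 ^ n) 1 powr \<epsilon> * (real (Suc n))\<^sup>2"
      by (rule mult_mono[OF a1 b1]) (use a1 in auto)
    then show ?thesis unfolding X_def by simp
  qed
  define S where "S = (\<Sum>n. \<Sum>j. ennreal (exp (- X n j)))"
  have Sfin: "S < \<infinity>" unfolding S_def X_def using S_finite[OF ep] by simp
  define S' where "S' = enn2real S"
  have SS': "S = ennreal S'" using Sfin by (simp add: S'_def)
  have S'0: "0 \<le> S'" by (simp add: S'_def)
  have inc_tail: "measure M {\<omega>\<in>space M. r * w n j < \<bar>\<Delta> n j \<omega>\<bar>} \<le> 2 * exp (- (r\<^sup>2 / (4 * K) * X n j))"
    if r0: "0 < r" for r n j
  proof -
    define t where "t = real (Suc j) / 2 ^ n"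
    define s where "s = real j / 2 ^ n"
    have ts: "0 \<le> s" "s < t" "t \<le> s + 1" by (auto simp: t_def s_def field_simps)
    define v where "v = mbm_cov H t t - 2 * mbm_cov H t s + mbm_cov H s s"
    define V where "V = K * max t 1 powr (2 * h2 + \<epsilon>) * (t - s) powr (2 * h3)"
    have vV: "v \<le> V" unfolding v_def V_def h3_def using Kb[OF ts] .
    have V0: "0 < V" using K0 ts by (simp add: V_def)
    have ch: "\<And>\<theta>. (\<integral>\<omega>. cis (\<theta> * \<Delta> n j \<omega>) \<partial>M) = complex_of_real (exp (- (\<theta>\<^sup>2 * v) / 2))"
      unfolding \<Delta>_def v_def t_def[symmetric] s_def[symmetric]
      using char_incr[OF Y_mbm, of t s] ts by simp
    have x0: "0 < r * w n j" using r0 w0 by simp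
    have g: "measure M {\<omega>\<in>space M. r * w n j < \<bar>\<Delta> n j \<omega>\<bar>} \<le> 2 * exp (- (r * w n j)\<^sup>2 / (4 * V))"
      using gauss_tail(2)[OF P \<Delta>M ch x0 vV V0] .
    have e: "(r * w n j)\<^sup>2 / (4 * V) = r\<^sup>2 / (4 * K) * X n j"
    proof -
      have tsd: "t - s = 1 / 2 ^ n" unfolding t_def s_def diff_divide_distrib[symmetric] by simp
      show ?thesis unfolding V_def w_def X_def \<alpha>_def tsd t_def[symmetric]
        by (rule w_ratio) (use K0 in auto)
    qed
    have "- (r * w n j)\<^sup>2 / (4 * V) = - ((r * w n j)\<^sup>2 / (4 * V))" by simp
    then have "- (r * w n j)\<^sup>2 / (4 * V) = - (r\<^sup>2 / (4 * K) * X n j)" unfolding e .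
    then show ?thesis using g by simp
  qed
  have Ztail: "emeasure M {\<omega>\<in>space M. ennreal r < Z \<omega>} \<le> ennreal (2 * exp (1 - r\<^sup>2 / (4 * K)) * S')"
    if r0: "0 < r" and a1: "1 \<le> r\<^sup>2 / (4 * K)" for r
  proof -
    define a where "a = r\<^sup>2 / (4 * K)"
    define A where "A n j = {\<omega>\<in>space M. r * w n j < \<bar>\<Delta> n j \<omega>\<bar>}" for n j
    have AM: "A n j \<in> sets M" for n j unfolding A_def by measurable
    have sub: "{\<omega>\<in>space M. ennreal r < Z \<omega>} \<subseteq> (\<Union>n. \<Union>j. A n j)"
    proof
      fix \<omega> assume "\<omega> \<in> {\<omega>\<in>space M. ennreal r < Z \<omega>}"
      then have om: "\<omega> \<in> space M" and "ennreal r < Z \<omega>" by auto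
      then obtain n j where "ennreal r < ennreal (\<bar>\<Delta> n j \<omega>\<bar> / w n j)" unfolding Z_def by (auto simp: less_SUP_iff)
      then have "r < \<bar>\<Delta> n j \<omega>\<bar> / w n j" using r0 by (simp add: ennreal_less_iff)
      then have "r * w n j < \<bar>\<Delta> n j \<omega>\<bar>" using w0[of n j] by (simp add: pos_less_divide_eq)
      then show "\<omega> \<in> (\<Union>n. \<Union>j. A n j)" using om by (auto simp: A_def)
    qed
    have pwA: "emeasure M (A n j) \<le> ennreal (2 * exp (1 - a)) * ennreal (exp (- X n j))" for n j
    proof -
    have "emeasure M (A n j) = ennreal (measure M (A n j))" by (rule emeasure_eq_measure)
    also have "measure M (A n j) \<le> 2 * exp (- (a * X n j))"
      unfolding A_def a_def by (rule inc_tail[OF r0])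
    also have "2 * exp (- (a * X n j)) \<le> 2 * exp (1 - a) * exp (- X n j)"
    proof -
      have "0 \<le> (a - 1) * (X n j - 1)" using a1 X1[of n j] by (simp add: a_def)
      then have "- (a * X n j) \<le> (1 - a) + - X n j" by (simp add: algebra_simps)
      then have "exp (- (a * X n j)) \<le> exp (1 - a) * exp (- X n j)" by (simp add: exp_add[symmetric])
      then show ?thesis by simp
    qed
    finally show "emeasure M (A n j) \<le> ennreal (2 * exp (1 - a)) * ennreal (exp (- X n j))"
      by (simp add: ennreal_mult[symmetric] ennreal_leI)
    qed
    have "emeasure M {\<omega>\<in>space M. ennreal r < Z \<omega>} \<le> emeasure M (\<Union>n. \<Union>j. A n j)"
      using sub AM by (intro emeasure_mono) auto
    also have "\<dots> \<le> (\<Sum>n. emeasure M (\<Union>j. A n j))"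
      using AM by (intro emeasure_subadditive_countably) auto
    also have "\<dots> \<le> (\<Sum>n. \<Sum>j. emeasure M (A n j))"
      using AM by (intro suminf_le summableI emeasure_subadditive_countably) auto
    also have "\<dots> \<le> (\<Sum>n. \<Sum>j. ennreal (2 * exp (1 - a)) * ennreal (exp (- X n j)))"
      by (intro suminf_le summableI pwA)
    also have "\<dots> = ennreal (2 * exp (1 - a)) * S" unfolding S_def by simp
    also have "\<dots> = ennreal (2 * exp (1 - a) * S')" unfolding SS' by (simp add: ennreal_mult[symmetric] S'0)
    finally show ?thesis by (simp add: a_def)
  qed
  have Ztail_r: "measure M {\<omega>\<in>space M. ennreal r < Z \<omega>} \<le> 2 * exp (1 - r\<^sup>2 / (4 * K)) * S'"
    if "0 < r" "1 \<le> r\<^sup>2 / (4 * K)" for r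
  proof -
    have "ennreal (measure M {\<omega>\<in>space M. ennreal r < Z \<omega>}) \<le> ennreal (2 * exp (1 - r\<^sup>2 / (4 * K)) * S')"
      using Ztail[OF that] by (simp add: emeasure_eq_measure)
    then show ?thesis using S'0 by (simp add: ennreal_le_iff)
  qed
  have Zfin: "AE \<omega> in M. Z \<omega> \<noteq> \<infinity>"
  proof -
    define N where "N = {\<omega>\<in>space M. Z \<omega> = \<infinity>}"
    have NM: "N \<in> sets M" unfolding N_def by measurable
    have mN: "measure M N \<le> 2 * exp 1 * S' / a" if a1: "1 \<le> a" for a
    proof -
      define r where "r = sqrt (4 * K * a)"
      have r0: "0 < r" using K0 a1 by (simp add: r_def)
      have ra: "r\<^sup>2 / (4 * K) = a" using K0 a1 by (simp add: r_def)
      have "N \<subseteq> {\<omega>\<in>space M. ennreal r < Z \<omega>}" by (auto simp: N_def)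
      then have "measure M N \<le> measure M {\<omega>\<in>space M. ennreal r < Z \<omega>}"
        by (intro finite_measure_mono) measurable
      also have "\<dots> \<le> 2 * exp (1 - a) * S'" using Ztail_r[OF r0] ra a1 by simp
      also have "exp (1 - a) \<le> exp 1 / a"
      proof -
        have "a \<le> exp a" using exp_ge_add_one_self[of a] by linarith
        then have "a * exp (-a) \<le> 1" by (simp add: exp_minus field_simps)
        then have ea: "exp (-a) \<le> 1 / a" using a1 by (simp add: field_simps)
        have e: "exp (1 - a) = exp 1 * exp (-a)" by (simp add: exp_add[symmetric])
        have "exp 1 * exp (-a) \<le> exp 1 * (1 / a)" using ea by (intro mult_left_mono) auto
        then show ?thesis unfolding e by simp
      qed
      then have "2 * exp (1 - a) * S' \<le> 2 * (exp 1 / a) * S'" using S'0 by (intro mult_right_mono) auto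
      finally show ?thesis by simp
    qed
    have "measure M N = 0"
    proof (rule ccontr)
      assume "measure M N \<noteq> 0"
      then have m0: "0 < measure M N" by (simp add: order_less_le)
      define a where "a = max 1 (4 * exp 1 * S' / measure M N)"
      have a1: "1 \<le> a" by (simp add: a_def)
      have "4 * exp 1 * S' / measure M N \<le> a" by (simp add: a_def)
      then have "4 * exp 1 * S' \<le> a * measure M N" using m0 by (simp add: pos_divide_le_eq mult.commute)
      then have "2 * exp 1 * S' / a \<le> measure M N / 2" using a1 by (simp add: field_simps)
      then show False using mN[OF a1] m0 by simp
    qed
    then have "emeasure M N = 0" by (simp add: emeasure_eq_measure)
    then show ?thesis by (subst AE_iff_measurable[OF NM]) (auto simp: N_def)
  qed
  define \<eta> where "\<eta> \<omega> = Cch h3 * enn2real (Z \<omega>)" for \<omega>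
  have Cp: "0 < Cch h3"
  proof -
    have q3: "0 < qh h3" "qh h3 < 1" using qh_props[OF h3(1)] by auto
    have c0: "0 \<le> cph h3" "0 \<le> Aph h3" using q3 by (simp_all add: cph_def Aph_def)
    have "0 \<le> 2 * cph h3 * Aph h3" using c0 by (intro mult_nonneg_nonneg) auto
    then have a: "0 < 1 + 2 * cph h3 * Aph h3" by linarith
    have "0 < 1 / ln (2::real)" by simp
    then have b: "0 < 1 / ln (2::real) + 1" by linarith
    show ?thesis unfolding Cch_def using a b by simp
  qed
  show "\<exists>\<eta>. \<eta> \<in> borel_measurable M \<and> (\<forall>\<omega>\<in>space M. \<eta> \<omega> \<ge> 0) \<and>
           (AE \<omega> in M. \<forall>t1 t2. 0 \<le> t2 \<and> t2 < t1 \<and> t1 \<le> t2 + 1 \<longrightarrow>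
              \<bar>Y t1 \<omega> - Y t2 \<omega>\<bar> \<le>
                max (t1 powr (h2 + \<epsilon>)) 1 * (t1 - t2) powr (min h1 \<kappa>) *
                max (\<bar>ln (t1 - t2)\<bar> powr p) 1 * \<eta> \<omega>) \<and>
           (\<exists>C1>0. \<exists>C2>0. \<forall>u>0. measure M {\<omega>\<in>space M. \<eta> \<omega> > u} \<le> C1 * exp (- C2 * u\<^sup>2))"
  proof (intro exI[of _ \<eta>] conjI)
    show "\<eta> \<in> borel_measurable M" unfolding \<eta>_def by measurable
    show "\<forall>\<omega>\<in>space M. 0 \<le> \<eta> \<omega>" using Cp by (simp add: \<eta>_def)
    show "AE \<omega> in M. \<forall>t1 t2. 0 \<le> t2 \<and> t2 < t1 \<and> t1 \<le> t2 + 1 \<longrightarrow>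
              \<bar>Y t1 \<omega> - Y t2 \<omega>\<bar> \<le>
                max (t1 powr (h2 + \<epsilon>)) 1 * (t1 - t2) powr (min h1 \<kappa>) *
                max (\<bar>ln (t1 - t2)\<bar> powr p) 1 * \<eta> \<omega>"
      using Zfin
    proof (rule AE_mp, intro AE_I2 impI allI)
      fix \<omega> and t1 t2 :: real assume om: "\<omega> \<in> space M" and Zf: "Z \<omega> \<noteq> \<infinity>"
        and tt: "0 \<le> t2 \<and> t2 < t1 \<and> t1 \<le> t2 + 1"
      define B where "B = enn2real (Z \<omega>)"
      have B0: "0 \<le> B" by (simp add: B_def)
      have ZB: "Z \<omega> = ennreal B" using Zf by (simp add: B_def less_top)
      have inc: "\<bar>Y (real (Suc j) / 2 ^ n) \<omega> - Y (real j / 2 ^ n) \<omega>\<bar>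
               \<le> B * (max (real (Suc j) / 2 ^ n) 1 powr \<alpha> * (qh h3 ^ n * real (Suc n)))" for n j
      proof -
        have "ennreal (\<bar>\<Delta> n j \<omega>\<bar> / w n j) \<le> (SUP j. ennreal (\<bar>\<Delta> n j \<omega>\<bar> / w n j))" by (rule SUP_upper) simp
        also have "\<dots> \<le> Z \<omega>" unfolding Z_def by (rule SUP_upper) simp
        finally have "\<bar>\<Delta> n j \<omega>\<bar> / w n j \<le> B" using B0 by (simp add: ZB)
        then have "\<bar>\<Delta> n j \<omega>\<bar> \<le> B * w n j" using w0[of n j] by (simp add: pos_divide_le_eq)
        then show ?thesis by (simp add: \<Delta>_def w_def)
      qed
      have fc: "continuous_on {0..} (\<lambda>t. Y t \<omega>)" using Y_cont om by simp
      have "\<bar>Y t1 \<omega> - Y t2 \<omega>\<bar> \<le> Cch h3 * B * max t1 1 powr \<alpha> * (t1 - t2) powr h3 * max (\<bar>ln (t1 - t2)\<bar> powr p) 1"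
        using chain_main[of "\<lambda>t. Y t \<omega>" B \<alpha> h3 p t2 t1, OF fc B0 \<alpha>0 h3 _ inc] p2 tt by auto
      also have "max t1 1 powr \<alpha> = max (t1 powr (h2 + \<epsilon>)) 1" using tt \<alpha>0 by (simp add: maxpowr \<alpha>_def)
      finally show "\<bar>Y t1 \<omega> - Y t2 \<omega>\<bar> \<le> max (t1 powr (h2 + \<epsilon>)) 1 * (t1 - t2) powr (min h1 \<kappa>) *
                max (\<bar>ln (t1 - t2)\<bar> powr p) 1 * \<eta> \<omega>"
        by (simp add: \<eta>_def B_def h3_def mult_ac)
    qed
    define C2 where "C2 = 1 / (4 * K * (Cch h3)\<^sup>2)"
    define C1 where "C1 = exp 1 * (2 * S' + 1)"
    show "\<exists>C1>0. \<exists>C2>0. \<forall>u>0. measure M {\<omega>\<in>space M. \<eta> \<omega> > u} \<le> C1 * exp (- C2 * u\<^sup>2)"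
    proof -
      have C1p: "0 < C1" using S'0 by (simp add: C1_def)
      have C2p: "0 < C2" using K0 Cp by (simp add: C2_def)
      have "\<forall>u>0. measure M {\<omega>\<in>space M. \<eta> \<omega> > u} \<le> C1 * exp (- C2 * u\<^sup>2)"
      proof (intro allI impI)
      fix u :: real assume u0: "0 < u"
      define r where "r = u / Cch h3"
      have r0: "0 < r" using u0 Cp by (simp add: r_def)
      have ra: "r\<^sup>2 / (4 * K) = C2 * u\<^sup>2" using Cp K0 by (simp add: r_def C2_def power_divide field_simps)
      have sub: "{\<omega>\<in>space M. \<eta> \<omega> > u} \<subseteq> {\<omega>\<in>space M. ennreal r < Z \<omega>}"
      proof safe
        fix \<omega> assume om: "\<omega> \<in> space M" and gt: "u < \<eta> \<omega>"
        then have "r < enn2real (Z \<omega>)" using Cp by (simp add: \<eta>_def r_def pos_divide_less_eq mult.commute)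
        then show "ennreal r < Z \<omega>"
          using r0 by (cases "Z \<omega>" rule: ennreal_cases) (auto simp: ennreal_less_iff)
      qed
      have "measure M {\<omega>\<in>space M. \<eta> \<omega> > u} \<le> measure M {\<omega>\<in>space M. ennreal r < Z \<omega>}"
        using sub by (intro finite_measure_mono) measurable
      also have "\<dots> \<le> C1 * exp (- C2 * u\<^sup>2)"
      proof (cases "1 \<le> C2 * u\<^sup>2")
        case True
        have "measure M {\<omega>\<in>space M. ennreal r < Z \<omega>} \<le> 2 * exp (1 - C2 * u\<^sup>2) * S'"
          using Ztail_r[OF r0] True ra by simp
        also have "\<dots> = exp 1 * (2 * S') * exp (- C2 * u\<^sup>2)" by (simp add: exp_diff exp_minus field_simps)
        also have "\<dots> \<le> C1 * exp (- C2 * u\<^sup>2)" unfolding C1_def by (intro mult_right_mono) auto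
        finally show ?thesis .
      next
        case False
        have "measure M {\<omega>\<in>space M. ennreal r < Z \<omega>} \<le> 1" by simp
        also have "1 \<le> exp 1 * exp (- C2 * u\<^sup>2)"
        proof -
          have "0 \<le> 1 + - C2 * u\<^sup>2" using False by simp
          then have g1: "1 \<le> exp (1 + - C2 * u\<^sup>2)" by simp
          have e: "exp (1 + - C2 * u\<^sup>2) = exp 1 * exp (- C2 * u\<^sup>2)" by (rule exp_add)
          show ?thesis using g1 unfolding e .
        qed
        also have "\<dots> \<le> C1 * exp (- C2 * u\<^sup>2)" unfolding C1_def using S'0 by (intro mult_right_mono) auto
        finally show ?thesis .
      qed
      finally show "measure M {\<omega>\<in>space M. \<eta> \<omega> > u} \<le> C1 * exp (- C2 * u\<^sup>2)" .
      qed
      then show ?thesis using C1p C2p by blast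
    qed
  qed
qed

end
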